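(* Let $\Gamma$ be a finite, undirected, simplicial graph with $\#V\Gamma\ge3$ whose complement $\Gamma^c$ is connected. Let $\mathbf{w}\in W_\Gamma$ and let $\mathcal{S}\subseteq W_\Gamma$ be finite. Then there exist $\mathbf{v}\in W_\Gamma$ and a closed walk $(t_1,\dots,t_n)$ in $\Gamma^c$ covering the whole graph such that for all $L\in\mathbb{N}_{\ge1}$ and all $\mathbf{x}\in\mathcal{S}\setminus\{e\}$: $|\mathbf{w}\mathbf{v}(t_1\cdots t_n)^L|=|\mathbf{w}|+|\mathbf{v}|+|(t_1\cdots t_n)^L|$ and $\mathbf{w}\mathbf{v}(t_1\cdots t_n)^L\not\le\mathbf{x}\mathbf{w}\mathbf{v}(t_1\cdots t_n)^L$.
   Context: $\Gamma^c$ is the graph on $V\Gamma$ with an edge between distinct $v,v'$ iff $(v,v')\notin E\Gamma$. $W_\Gamma=\langle V\Gamma\mid v^2=e,\ vv'=v'v \text{ for }(v,v')\in E\Gamma\rangle$ is the right-angled Coxeter group, $|\cdot|$ the word length with respect to the generating set $V\Gamma$, and $\mathbf{u}\le\mathbf{w}$ means $|\mathbf{u}^{-1}\mathbf{w}|=|\mathbf{w}|-|\mathbf{u}|$ (right weak Bruhat order). A walk in a graph $G$ is a sequence of vertices $(v_1,\dots,v_n)$ with $v_i,v_{i+1}$ adjacent in $G$ for all $i<n$; it is closed if in addition $v_1,v_n$ are adjacent, and covers the whole graph if $\{v_1,\dots,v_n\}$ is the full vertex set. The product $t_1\cdots t_n$ is taken in $W_\Gamma$. *)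

theory Defs
  imports Main
begin

definition simple_graph :: "'a set \<Rightarrow> ('a \<Rightarrow> 'a \<Rightarrow> bool) \<Rightarrow> bool" where
  "simple_graph V E \<longleftrightarrow> finite V \<and> (\<forall>a b. E a b \<longrightarrow> E b a)
     \<and> (\<forall>a. \<not> E a a) \<and> (\<forall>a b. E a b \<longrightarrow> a \<in> V \<and> b \<in> V)"

definition compl_adj :: "'a set \<Rightarrow> ('a \<Rightarrow> 'a \<Rightarrow> bool) \<Rightarrow> 'a \<Rightarrow> 'a \<Rightarrow> bool" where
  "compl_adj V E a b \<longleftrightarrow> a \<in> V \<and> b \<in> V \<and> a \<noteq> b \<and> \<not> E a b"

definition compl_connected :: "'a set \<Rightarrow> ('a \<Rightarrow> 'a \<Rightarrow> bool) \<Rightarrow> bool" where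
  "compl_connected V E \<longleftrightarrow> (\<forall>a\<in>V. \<forall>b\<in>V. (compl_adj V E)\<^sup>*\<^sup>* a b)"

definition compl_walk :: "'a set \<Rightarrow> ('a \<Rightarrow> 'a \<Rightarrow> bool) \<Rightarrow> 'a list \<Rightarrow> bool" where
  "compl_walk V E ts \<longleftrightarrow> ts \<noteq> [] \<and> set ts \<subseteq> V \<and>
     (\<forall>i. Suc i < length ts \<longrightarrow> compl_adj V E (ts ! i) (ts ! Suc i))"

definition compl_closed_walk :: "'a set \<Rightarrow> ('a \<Rightarrow> 'a \<Rightarrow> bool) \<Rightarrow> 'a list \<Rightarrow> bool" where
  "compl_closed_walk V E ts \<longleftrightarrow> compl_walk V E ts \<and> compl_adj V E (hd ts) (last ts)"

text \<open>Right-angled Coxeter group W_Gamma: elements are represented by words over V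
(lists), multiplication is concatenation, the identity is the empty word, and two
words represent the same element iff they are related by the congruence generated by
the relations v v = e (v in V) and v v' = v' v for (v,v') an edge.\<close>
inductive racg_step :: "'a set \<Rightarrow> ('a \<Rightarrow> 'a \<Rightarrow> bool) \<Rightarrow> 'a list \<Rightarrow> 'a list \<Rightarrow> bool"
  for V E where
  cancel: "a \<in> V \<Longrightarrow> racg_step V E (xs @ [a, a] @ ys) (xs @ ys)"
| commute: "E a b \<Longrightarrow> racg_step V E (xs @ [a, b] @ ys) (xs @ [b, a] @ ys)"

definition racg_eq :: "'a set \<Rightarrow> ('a \<Rightarrow> 'a \<Rightarrow> bool) \<Rightarrow> 'a list \<Rightarrow> 'a list \<Rightarrow> bool" where
  "racg_eq V E = (symclp (racg_step V E))\<^sup>*\<^sup>*"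

definition racg_len :: "'a set \<Rightarrow> ('a \<Rightarrow> 'a \<Rightarrow> bool) \<Rightarrow> 'a list \<Rightarrow> nat" where
  "racg_len V E w = (LEAST n. \<exists>u. u \<in> lists V \<and> racg_eq V E u w \<and> length u = n)"

text \<open>Inverse of the element represented by w is represented by rev w (generators are
involutions). Right weak Bruhat order: u \<le> w iff |u^{-1} w| = |w| - |u|.\<close>
definition racg_le :: "'a set \<Rightarrow> ('a \<Rightarrow> 'a \<Rightarrow> bool) \<Rightarrow> 'a list \<Rightarrow> 'a list \<Rightarrow> bool" where
  "racg_le V E u w \<longleftrightarrow>
     int (racg_len V E (rev u @ w)) = int (racg_len V E w) - int (racg_len V E u)"

end

theory Submission
  imports Defs
begin

locale rg =
  fixes V :: "'a set" and E :: "'a \<Rightarrow> 'a \<Rightarrow> bool"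
  assumes sg: "simple_graph V E"
begin

lemma E_sym: "E a b \<Longrightarrow> E b a"
  using sg unfolding simple_graph_def by blast

lemma E_irr[simp]: "\<not> E a a"
  using sg unfolding simple_graph_def by blast

lemma E_V: "E a b \<Longrightarrow> a \<in> V \<and> b \<in> V"
  using sg unfolding simple_graph_def by blast

lemma fin_V: "finite V"
  using sg unfolding simple_graph_def by blast

abbreviation req where "req \<equiv> racg_eq V E"
abbreviation len where "len \<equiv> racg_len V E"

lemma req_refl[simp]: "req u u"
  unfolding racg_eq_def by simp

lemma req_sym: "req u w \<Longrightarrow> req w u"
  unfolding racg_eq_def
proof (induction rule: rtranclp_induct)
  case base then show ?case by simp
next
  case (step y z)
  have "symclp (racg_step V E) z y" using step(2) by (auto simp: symclp_def)
  then show ?case using step(3) by (meson converse_rtranclp_into_rtranclp)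
qed

lemma req_trans: "req u w \<Longrightarrow> req w x \<Longrightarrow> req u x"
  unfolding racg_eq_def by auto

lemma step_req: "racg_step V E u w \<Longrightarrow> req u w"
  unfolding racg_eq_def by (auto simp: symclp_def)

lemma step_ctx: "racg_step V E u w \<Longrightarrow> racg_step V E (xs @ u @ ys) (xs @ w @ ys)"
proof (induction rule: racg_step.induct)
  case (cancel a as bs)
  then show ?case using racg_step.cancel[where xs="xs @ as" and ys="bs @ ys" and a=a and V=V and E=E] by simp
next
  case (commute a b as bs)
  then show ?case using racg_step.commute[where xs="xs @ as" and ys="bs @ ys" and a=a and b=b and V=V and E=E] by simp
qed

lemma req_ctx: "req u w \<Longrightarrow> req (xs @ u @ ys) (xs @ w @ ys)"
  unfolding racg_eq_def
proof (induction rule: rtranclp_induct)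
  case base then show ?case by simp
next
  case (step y z)
  have "symclp (racg_step V E) (xs @ y @ ys) (xs @ z @ ys)"
    using step(2) step_ctx by (auto simp: symclp_def)
  then show ?case using step(3) by (meson rtranclp.rtrancl_into_rtrancl)
qed

lemma req_app: "req u u' \<Longrightarrow> req w w' \<Longrightarrow> req (u @ w) (u' @ w')"
  using req_ctx[of u u' "[]" w] req_ctx[of w w' u' "[]"] req_trans by auto

lemma req_cancel: "a \<in> V \<Longrightarrow> req (xs @ a # a # ys) (xs @ ys)"
  using step_req[OF racg_step.cancel[where xs=xs and ys=ys and a=a and V=V and E=E]] by simp

lemma req_comm1: "E a b \<Longrightarrow> req (xs @ a # b # ys) (xs @ b # a # ys)"
  using step_req[OF racg_step.commute[where xs=xs and ys=ys and a=a and b=b and V=V and E=E]] by simp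

lemma req_commute: "\<forall>x\<in>set u. E a x \<Longrightarrow> req (xs @ a # u @ ys) (xs @ u @ a # ys)"
proof (induction u arbitrary: xs)
  case Nil then show ?case by simp
next
  case (Cons b u)
  have "req (xs @ a # b # u @ ys) (xs @ b # a # u @ ys)"
    using req_comm1[of a b xs "u @ ys"] Cons.prems by simp
  moreover have "req ((xs @ [b]) @ a # u @ ys) ((xs @ [b]) @ u @ a # ys)"
    using Cons.IH[of "xs @ [b]"] Cons.prems by simp
  ultimately show ?case using req_trans by simp
qed

lemma step_rev: "racg_step V E u w \<Longrightarrow> racg_step V E (rev u) (rev w)"
proof (induction rule: racg_step.induct)
  case (cancel a as bs)
  then show ?case using racg_step.cancel[where xs="rev bs" and ys="rev as" and a=a and V=V and E=E] by simp
next
  case (commute a b as bs)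
  then show ?case using racg_step.commute[where xs="rev bs" and ys="rev as" and a=b and b=a and V=V and E=E] E_sym by simp
qed

lemma req_rev: "req u w \<Longrightarrow> req (rev u) (rev w)"
  unfolding racg_eq_def
proof (induction rule: rtranclp_induct)
  case base then show ?case by simp
next
  case (step y z)
  have "symclp (racg_step V E) (rev y) (rev z)"
    using step(2) step_rev by (auto simp: symclp_def)
  then show ?case using step(3) by (meson rtranclp.rtrancl_into_rtrancl)
qed

lemma req_rev_self: "w \<in> lists V \<Longrightarrow> req (rev w @ w) []"
proof (induction w)
  case Nil then show ?case by simp
next
  case (Cons a w)
  have "req (rev w @ a # a # w) (rev w @ w)" using req_cancel Cons.prems by simp
  then show ?case using Cons req_trans by simp
qed

lemma req_self_rev: "w \<in> lists V \<Longrightarrow> req (w @ rev w) []"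
  using req_rev_self[of "rev w"] by (simp add: in_lists_conv_set)

definition cw :: "'a list \<Rightarrow> 'a list \<Rightarrow> 'a list" where
  "cw Y P = rev P @ Y @ P"

lemma cw_Nil[simp]: "cw Y [] = Y" by (simp add: cw_def)
lemma cw_append: "cw Y (P @ Q) = cw (cw Y P) Q" by (simp add: cw_def)
lemma cw_snoc: "cw Y (P @ [p]) = p # cw Y P @ [p]" by (simp add: cw_def)
lemma cw_rev: "cw (rev Y) P = rev (cw Y P)" by (simp add: cw_def)
lemma cw_lists: "Y \<in> lists V \<Longrightarrow> P \<in> lists V \<Longrightarrow> cw Y P \<in> lists V" by (auto simp: cw_def)

lemma cw_req: "req Y Y' \<Longrightarrow> req (cw Y P) (cw Y' P)"
  unfolding cw_def using req_ctx by blast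

lemma cw_triv: "P \<in> lists V \<Longrightarrow> req (cw Y P) [] \<Longrightarrow> req Y []"
proof -
  assume P: "P \<in> lists V" and h: "req (cw Y P) []"
  have "req (P @ cw Y P @ rev P) (P @ [] @ rev P)" using req_ctx[OF h] .
  moreover have "P @ cw Y P @ rev P = (P @ rev P) @ Y @ (P @ rev P)" by (simp add: cw_def)
  moreover have "req ((P @ rev P) @ Y @ (P @ rev P)) ([] @ Y @ [])"
    using req_app[OF req_app[OF req_self_rev[OF P] req_refl] req_self_rev[OF P]] by simp
  ultimately have "req Y (P @ [] @ rev P)" using req_sym req_trans by (metis append.left_neutral append_Nil2)
  then show ?thesis using req_self_rev[OF P] req_trans by (metis append.left_neutral)
qed

end

context rg
begin

definition red :: "'a list \<Rightarrow> bool" where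
  "red u \<longleftrightarrow> \<not> (\<exists>u1 a u2 u3. u = u1 @ a # u2 @ a # u3 \<and> (\<forall>x\<in>set u2. E a x))"

lemma bad_notred: "\<forall>x\<in>set p2. E a x \<Longrightarrow> \<not> red (p1 @ a # p2 @ a # p3)"
  unfolding red_def by blast

lemma red_Nil[simp]: "red []" unfolding red_def by auto

lemma red_appendD1: "red (u @ w) \<Longrightarrow> red u"
  unfolding red_def by (metis append.assoc append_Cons)

lemma red_appendD2: "red (u @ w) \<Longrightarrow> red w"
  unfolding red_def by (metis append.assoc)

lemma red_rev: "red u \<Longrightarrow> red (rev u)"
proof -
  assume r: "red u"
  show "red (rev u)"
  proof (rule ccontr)
    assume "\<not> red (rev u)"
    then obtain u1 a u2 u3 where eq: "rev u = u1 @ a # u2 @ a # u3" and c: "\<forall>x\<in>set u2. E a x"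
      unfolding red_def by blast
    have "u = rev u3 @ a # rev u2 @ a # rev u1" using eq by (metis rev_rev_ident rev.simps(2) rev_append append.assoc append_Cons append_Nil)
    then show False using r bad_notred[of "rev u2" a "rev u3" "rev u1"] c by simp
  qed
qed

lemma red_rev_iff: "red (rev u) = red u"
  using red_rev by fastforce

definition proj :: "'a \<Rightarrow> 'a \<Rightarrow> 'a list \<Rightarrow> 'a list" where
  "proj a b u = filter (\<lambda>x. x = a \<or> x = b) u"

definition raw :: "'a list \<Rightarrow> 'a \<Rightarrow> 'a \<Rightarrow> 'a list" where
  "raw u = (\<lambda>a b. if E a b then [] else proj a b u)"

definition canc :: "'a \<Rightarrow> ('a \<Rightarrow> 'a \<Rightarrow> 'a list) \<Rightarrow> bool" where
  "canc s F \<longleftrightarrow> (\<forall>b. \<not> E s b \<longrightarrow> F s b \<noteq> [] \<and> last (F s b) = s)"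

definition act :: "'a \<Rightarrow> ('a \<Rightarrow> 'a \<Rightarrow> 'a list) \<Rightarrow> 'a \<Rightarrow> 'a \<Rightarrow> 'a list" where
  "act s F = (\<lambda>a b. if E a b \<or> (a \<noteq> s \<and> b \<noteq> s) then F a b
      else if canc s F then butlast (F a b) else F a b @ [s])"

definition Phi :: "'a list \<Rightarrow> 'a \<Rightarrow> 'a \<Rightarrow> 'a list" where
  "Phi u = foldl (\<lambda>F s. act s F) (\<lambda>a b. []) u"

lemma Phi_snoc: "Phi (u @ [s]) = act s (Phi u)"
  unfolding Phi_def by simp

lemma Phi_Nil: "Phi [] = raw []"
  unfolding Phi_def raw_def proj_def by (simp add: fun_eq_iff)

lemma proj_C: "\<forall>x\<in>set u2. E s x \<Longrightarrow> \<not> E a b \<Longrightarrow> a = s \<or> b = s \<Longrightarrow> proj a b u2 = []"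
  unfolding proj_def using E_sym by (auto simp: filter_empty_conv)

lemma canc_split: "u = u1 @ s # u2 \<Longrightarrow> \<forall>x\<in>set u2. E s x \<Longrightarrow> canc s (raw u)"
  unfolding canc_def
proof (intro allI impI)
  fix b assume u: "u = u1 @ s # u2" and c: "\<forall>x\<in>set u2. E s x" and nb: "\<not> E s b"
  have "proj s b u2 = []" using proj_C[OF c nb] by simp
  then have "raw u s b = proj s b u1 @ [s]" using nb u unfolding raw_def proj_def by simp
  then show "raw u s b \<noteq> [] \<and> last (raw u s b) = s" by simp
qed

lemma canc_splitD: "canc s (raw u) \<Longrightarrow> \<exists>u1 u2. u = u1 @ s # u2 \<and> (\<forall>x\<in>set u2. E s x)"
proof -
  assume cs: "canc s (raw u)"
  have "raw u s s \<noteq> []" using cs unfolding canc_def by simp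
  then have "s \<in> set u" unfolding raw_def proj_def by (auto simp: filter_empty_conv)
  then obtain u1 u2 where u: "u = u1 @ s # u2" and ns: "s \<notin> set u2"
    by (meson split_list_last)
  have "\<forall>x\<in>set u2. E s x"
  proof
    fix x assume x: "x \<in> set u2"
    show "E s x"
    proof (rule ccontr)
      assume nE: "\<not> E s x"
      have l: "last (raw u s x) = s" using cs nE unfolding canc_def by simp
      have pr: "proj s x u2 \<noteq> []" using x unfolding proj_def by (auto simp: filter_empty_conv)
      have "raw u s x = proj s x u1 @ s # proj s x u2" using nE u unfolding raw_def proj_def by simp
      then have "last (raw u s x) = last (proj s x u2)" using pr by simp
      moreover have "last (proj s x u2) \<in> set (proj s x u2)" using pr by simp
      ultimately have "s \<in> set (proj s x u2) \<or> x = s" using l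
        unfolding proj_def by (metis (mono_tags, lifting) mem_Collect_eq set_filter)
      then show False using ns x unfolding proj_def by auto
    qed
  qed
  then show ?thesis using u by blast
qed

lemma act_noncanc: "\<not> canc s (raw u) \<Longrightarrow> act s (raw u) = raw (u @ [s])"
  unfolding act_def raw_def proj_def by (auto intro!: ext)

lemma act_canc: "u = u1 @ s # u2 \<Longrightarrow> \<forall>x\<in>set u2. E s x \<Longrightarrow> act s (raw u) = raw (u1 @ u2)"
proof -
  assume u: "u = u1 @ s # u2" and c: "\<forall>x\<in>set u2. E s x"
  have cs: "canc s (raw u)" using canc_split[OF u c] .
  show ?thesis
  proof (intro ext)
    fix a b
    show "act s (raw u) a b = raw (u1 @ u2) a b"
    proof (cases "E a b \<or> (a \<noteq> s \<and> b \<noteq> s)")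
      case True
      then show ?thesis unfolding act_def raw_def proj_def using u by auto
    next
      case False
      then have nE: "\<not> E a b" and ab: "a = s \<or> b = s" by auto
      have p2: "proj a b u2 = []" using proj_C[OF c nE ab] .
      have "raw u a b = proj a b u1 @ [s] @ proj a b u2" using nE ab u unfolding raw_def proj_def by auto
      moreover have "raw (u1 @ u2) a b = proj a b u1 @ proj a b u2" using nE unfolding raw_def proj_def by auto
      ultimately show ?thesis using False cs p2 unfolding act_def by simp
    qed
  qed
qed

lemma raw_move: "\<forall>x\<in>set u2. E s x \<Longrightarrow> raw (u1 @ s # u2) = raw (u1 @ u2 @ [s])"
proof (intro ext)
  fix a b assume c: "\<forall>x\<in>set u2. E s x"
  show "raw (u1 @ s # u2) a b = raw (u1 @ u2 @ [s]) a b"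
  proof (cases "E a b \<or> (a \<noteq> s \<and> b \<noteq> s)")
    case True
    then show ?thesis unfolding raw_def proj_def by auto
  next
    case False
    then have nE: "\<not> E a b" and ab: "a = s \<or> b = s" by auto
    have p2: "proj a b u2 = []" using proj_C[OF c nE ab] .
    then show ?thesis using nE ab unfolding raw_def proj_def by auto
  qed
qed

lemma red_del: assumes r: "red (u1 @ s # u2)" and c: "\<forall>x\<in>set u2. E s x" shows "red (u1 @ u2)"
proof (rule ccontr)
  assume "\<not> red (u1 @ u2)"
  then obtain p1 a p2 p3 where eq: "u1 @ u2 = p1 @ a # p2 @ a # p3" and ca: "\<forall>x\<in>set p2. E a x"
    unfolding red_def by blast
  show False
  proof (cases "length u1 \<le> length p1")
    case True
    then obtain m where m1: "p1 = u1 @ m" and m2: "u2 = m @ a # p2 @ a # p3"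
      using eq by (auto simp: append_eq_append_conv_if) (metis append_take_drop_id)
    have "u1 @ s # u2 = (u1 @ s # m) @ a # p2 @ a # p3" using m2 by simp
    then show False using r bad_notred[OF ca] by metis
  next
    case False
    then have "take (length p1) u1 = p1" and d: "drop (length p1) u1 @ u2 = a # p2 @ a # p3"
      using eq by (auto simp: append_eq_append_conv_if)
    then obtain q1 where u1: "u1 = p1 @ a # q1" and q: "q1 @ u2 = p2 @ a # p3"
      using False by (cases "drop (length p1) u1") (auto, metis append_take_drop_id)
    show False
    proof (cases "length q1 \<le> length p2")
      case True
      then obtain m where m1: "p2 = q1 @ m" and m2: "u2 = m @ a # p3"
        using q by (auto simp: append_eq_append_conv_if) (metis append_take_drop_id)
      have "E s a" using c m2 by simp
      then have "E a s" using E_sym by blast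
      then have "\<forall>x\<in>set (q1 @ s # m). E a x" using ca m1 by auto
      moreover have "u1 @ s # u2 = p1 @ a # (q1 @ s # m) @ a # p3" using u1 m2 by simp
      ultimately show False using r bad_notred by metis
    next
      case False
      then have "take (length p2) q1 = p2" and "drop (length p2) q1 @ u2 = a # p3"
        using q by (auto simp: append_eq_append_conv_if)
      then obtain q2 where q1: "q1 = p2 @ a # q2"
        using False by (cases "drop (length p2) q1") (auto, metis append_take_drop_id)
      have "u1 @ s # u2 = p1 @ a # p2 @ a # (q2 @ s # u2)" using u1 q1 by simp
      then show False using r bad_notred[OF ca] by metis
    qed
  qed
qed

lemma nosplit_after_del:
  assumes r: "red (u1 @ s # u2)" and c: "\<forall>x\<in>set u2. E s x"
  shows "\<not> (\<exists>v1 v2. u1 @ u2 = v1 @ s # v2 \<and> (\<forall>x\<in>set v2. E s x))"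
proof
  assume "\<exists>v1 v2. u1 @ u2 = v1 @ s # v2 \<and> (\<forall>x\<in>set v2. E s x)"
  then obtain v1 v2 where eq: "u1 @ u2 = v1 @ s # v2" and cv: "\<forall>x\<in>set v2. E s x" by blast
  have ns: "s \<notin> set u2" using c by auto
  show False
  proof (cases "length v1 < length u1")
    case True
    then have "take (length v1) u1 = v1" and d: "drop (length v1) u1 @ u2 = s # v2"
      using eq by (auto simp: append_eq_append_conv_if)
    then obtain m where u1: "u1 = v1 @ s # m" and "m @ u2 = v2"
      using True by (cases "drop (length v1) u1") (auto, metis append_take_drop_id)
    then have "\<forall>x\<in>set m. E s x" using cv by auto
    moreover have "u1 @ s # u2 = v1 @ s # m @ s # u2" using u1 by simp
    ultimately show False using r bad_notred by metis
  next
    case False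
    then obtain m where "v1 = u1 @ m" and "u2 = m @ s # v2"
      using eq by (auto simp: append_eq_append_conv_if) (metis append_take_drop_id)
    then show False using ns by simp
  qed
qed

lemma red_snoc: "red u \<Longrightarrow> \<not> (\<exists>u1 u2. u = u1 @ s # u2 \<and> (\<forall>x\<in>set u2. E s x)) \<Longrightarrow> red (u @ [s])"
proof -
  assume r: "red u" and ns: "\<not> (\<exists>u1 u2. u = u1 @ s # u2 \<and> (\<forall>x\<in>set u2. E s x))"
  show "red (u @ [s])"
  proof (rule ccontr)
    assume "\<not> red (u @ [s])"
    then obtain p1 a p2 p3 where eq: "u @ [s] = p1 @ a # p2 @ a # p3" and ca: "\<forall>x\<in>set p2. E a x"
      unfolding red_def by blast
    show False
    proof (cases p3 rule: rev_cases)
      case Nil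
      then have "u = p1 @ a # p2" and "a = s" using eq by auto
      then show False using ns ca by blast
    next
      case (snoc p3' y)
      then have "u = p1 @ a # p2 @ a # p3'" using eq by simp
      then show False using r bad_notred[OF ca] by simp
    qed
  qed
qed

lemma invol: "red u \<Longrightarrow> act s (act s (raw u)) = raw u"
proof (cases "canc s (raw u)")
  case False
  then have "act s (raw u) = raw (u @ [s])" using act_noncanc by blast
  moreover have "act s (raw (u @ s # [])) = raw (u @ [])" using act_canc[of "u @ [s]" u s "[]"] by simp
  ultimately show ?thesis by simp
next
  case True
  assume r: "red u"
  obtain u1 u2 where u: "u = u1 @ s # u2" and c: "\<forall>x\<in>set u2. E s x" using canc_splitD[OF True] by blast
  have a1: "act s (raw u) = raw (u1 @ u2)" using act_canc[OF u c] .
  have "\<not> canc s (raw (u1 @ u2))"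
    using canc_splitD nosplit_after_del[OF _ c] r u by blast
  then have "act s (raw (u1 @ u2)) = raw (u1 @ u2 @ [s])" using act_noncanc by simp
  also have "\<dots> = raw u" using raw_move[OF c, of u1] u by simp
  finally show ?thesis using a1 by simp
qed

lemma canc_act_other: "E a b \<Longrightarrow> canc a (act b F) = canc a F"
  unfolding canc_def act_def using E_sym by (auto, metis E_irr, metis E_irr)

lemma act_comm: "E a b \<Longrightarrow> act a (act b F) = act b (act a F)"
proof (intro ext)
  fix x y assume ab: "E a b"
  have c1: "canc a (act b F) = canc a F" using canc_act_other[OF ab] .
  have c2: "canc b (act a F) = canc b F" using canc_act_other[OF E_sym[OF ab]] .
  have ne: "a \<noteq> b" using ab by auto
  show "act a (act b F) x y = act b (act a F) x y"
    using c1 c2 ne ab E_sym unfolding act_def by (auto simp: c1 c2)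
qed

lemma Phi_char: "\<exists>u'. red u' \<and> Phi u = raw u' \<and> length u' \<le> length u \<and> set u' \<subseteq> set u"
proof (induction u rule: rev_induct)
  case Nil then show ?case using Phi_Nil by (intro exI[of _ "[]"]) simp
next
  case (snoc s u)
  then obtain u' where r: "red u'" and P: "Phi u = raw u'" and l: "length u' \<le> length u" and st: "set u' \<subseteq> set u"
    by blast
  show ?case
  proof (cases "canc s (raw u')")
    case True
    obtain u1 u2 where u: "u' = u1 @ s # u2" and c: "\<forall>x\<in>set u2. E s x" using canc_splitD[OF True] by blast
    have "Phi (u @ [s]) = raw (u1 @ u2)" using Phi_snoc P act_canc[OF u c] by simp
    moreover have "red (u1 @ u2)" using red_del r u c by simp
    ultimately show ?thesis using l st u by (intro exI[of _ "u1 @ u2"]) auto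
  next
    case False
    have "Phi (u @ [s]) = raw (u' @ [s])" using Phi_snoc P act_noncanc[OF False] by simp
    moreover have "red (u' @ [s])" using red_snoc[OF r] canc_split False by blast
    ultimately show ?thesis using l st by (intro exI[of _ "u' @ [s]"]) auto
  qed
qed

lemma Phi_red: "red u \<Longrightarrow> Phi u = raw u"
proof (induction u rule: rev_induct)
  case Nil then show ?case using Phi_Nil by simp
next
  case (snoc s u)
  have r: "red u" using snoc.prems red_appendD1 by blast
  have "\<not> canc s (raw u)"
  proof
    assume "canc s (raw u)"
    then obtain u1 u2 where u: "u = u1 @ s # u2" and c: "\<forall>x\<in>set u2. E s x" using canc_splitD by blast
    have "u @ [s] = u1 @ s # u2 @ s # []" using u by simp
    then show False using snoc.prems bad_notred[OF c] by metis
  qed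
  then show ?case using Phi_snoc snoc.IH[OF r] act_noncanc by simp
qed

lemma Phi_step: "racg_step V E u w \<Longrightarrow> Phi u = Phi w"
proof (induction rule: racg_step.induct)
  case (cancel a xs ys)
  obtain u' where r: "red u'" and P: "Phi xs = raw u'" using Phi_char by blast
  have "Phi (xs @ [a, a] @ ys) = foldl (\<lambda>F s. act s F) (act a (act a (Phi xs))) ys"
    unfolding Phi_def by simp
  also have "\<dots> = foldl (\<lambda>F s. act s F) (Phi xs) ys" using invol[OF r] P by simp
  also have "\<dots> = Phi (xs @ ys)" unfolding Phi_def by simp
  finally show ?case .
next
  case (commute a b xs ys)
  have "Phi (xs @ [a, b] @ ys) = foldl (\<lambda>F s. act s F) (act b (act a (Phi xs))) ys"
    unfolding Phi_def by simp
  also have "\<dots> = foldl (\<lambda>F s. act s F) (act a (act b (Phi xs))) ys"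
    using act_comm[OF commute] by simp
  also have "\<dots> = Phi (xs @ [b, a] @ ys)" unfolding Phi_def by simp
  finally show ?case .
qed

lemma Phi_req: "req u w \<Longrightarrow> Phi u = Phi w"
  unfolding racg_eq_def
proof (induction rule: rtranclp_induct)
  case base then show ?case by simp
next
  case (step y z)
  then show ?case using Phi_step by (auto simp: symclp_def)
qed

lemma count_filter: "length (filter (\<lambda>x. x = a) u) = count_list u a"
  by (induction u) auto

lemma len_raw: "set u \<subseteq> V \<Longrightarrow> length u = (\<Sum>a\<in>V. length (raw u a a))"
proof -
  assume s: "set u \<subseteq> V"
  have "\<And>a. length (raw u a a) = count_list u a"
    unfolding raw_def proj_def using count_filter by simp
  then show ?thesis using sum_count_set[OF s fin_V] by simp
qed

lemma req_len_eq: "req u w \<Longrightarrow> len u = len w"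
  unfolding racg_len_def using req_sym req_trans by metis

lemma len_le: "w \<in> lists V \<Longrightarrow> len w \<le> length w"
  unfolding racg_len_def by (rule Least_le) auto

lemma len_witness: "w \<in> lists V \<Longrightarrow> \<exists>u. u \<in> lists V \<and> req u w \<and> length u = len w"
  unfolding racg_len_def by (rule LeastI_ex) auto

lemma red_len: assumes r: "red u" and uV: "u \<in> lists V" shows "len u = length u"
  unfolding racg_len_def
proof (rule Least_equality)
  show "\<exists>u'. u' \<in> lists V \<and> req u' u \<and> length u' = length u" using uV by (intro exI[of _ u]) simp
next
  fix n assume "\<exists>u'. u' \<in> lists V \<and> req u' u \<and> length u' = n"
  then obtain u'' where u'': "u'' \<in> lists V" "req u'' u" "length u'' = n" by blast
  obtain u3 where r3: "red u3" and P3: "Phi u'' = raw u3" and l3: "length u3 \<le> length u''"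
    and s3: "set u3 \<subseteq> set u''" using Phi_char by blast
  have "raw u3 = raw u" using P3 Phi_req[OF u''(2)] Phi_red[OF r] by simp
  moreover have "set u3 \<subseteq> V" using s3 u''(1) by auto
  ultimately have "length u3 = length u" using len_raw uV by (metis in_lists_conv_set subsetI)
  then show "length u \<le> n" using l3 u''(3) by simp
qed

lemma notred_shorter:
  assumes uV: "u \<in> lists V" and nr: "\<not> red u" shows "len u < length u"
proof -
  obtain u1 a u2 u3 where eq: "u = u1 @ a # u2 @ a # u3" and c: "\<forall>x\<in>set u2. E a x"
    using nr unfolding red_def by blast
  have aV: "a \<in> V" using uV eq by simp
  have "req (u1 @ a # u2 @ a # u3) (u1 @ u2 @ a # a # u3)"
    using req_commute[OF c, of u1 "a # u3"] by simp
  moreover have "req (u1 @ u2 @ a # a # u3) (u1 @ u2 @ u3)"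
    using req_cancel[OF aV, of "u1 @ u2" u3] by simp
  ultimately have "req u (u1 @ u2 @ u3)" using eq req_trans by simp
  then have "len u = len (u1 @ u2 @ u3)" using req_len_eq by simp
  also have "\<dots> \<le> length (u1 @ u2 @ u3)" using len_le[of "u1 @ u2 @ u3"] uV eq by simp
  finally show ?thesis using eq by simp
qed

lemma red_iff_len: "u \<in> lists V \<Longrightarrow> red u \<longleftrightarrow> len u = length u"
  using red_len notred_shorter by fastforce

lemma red_rep: "w \<in> lists V \<Longrightarrow> \<exists>u. u \<in> lists V \<and> red u \<and> req u w \<and> length u = len w"
proof -
  assume w: "w \<in> lists V"
  obtain u where u: "u \<in> lists V" "req u w" "length u = len w" using len_witness[OF w] by blast
  have "len u = length u" using req_len_eq[OF u(2)] u(3) by simp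
  then have "red u" using red_iff_len u(1) by simp
  then show ?thesis using u by blast
qed

lemma len_append_le: "u \<in> lists V \<Longrightarrow> w \<in> lists V \<Longrightarrow> len (u @ w) \<le> len u + len w"
proof -
  assume u: "u \<in> lists V" and w: "w \<in> lists V"
  obtain u' where u': "u' \<in> lists V" "req u' u" "length u' = len u" using len_witness[OF u] by blast
  obtain w' where w': "w' \<in> lists V" "req w' w" "length w' = len w" using len_witness[OF w] by blast
  have "req (u' @ w') (u @ w)" using req_app[OF u'(2) w'(2)] .
  then have "len (u @ w) = len (u' @ w')" using req_len_eq by simp
  also have "\<dots> \<le> length (u' @ w')" using len_le[of "u' @ w'"] u' w' by simp
  finally show ?thesis using u' w' by simp
qed

lemma len_rev: "u \<in> lists V \<Longrightarrow> len (rev u) = len u"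
proof -
  assume u: "u \<in> lists V"
  obtain u' where u': "u' \<in> lists V" "red u'" "req u' u" "length u' = len u" using red_rep[OF u] by blast
  have "req (rev u') (rev u)" using req_rev[OF u'(3)] .
  then have "len (rev u) = len (rev u')" using req_len_eq by simp
  also have "\<dots> = length (rev u')" using red_len red_rev u' by (simp add: in_lists_conv_set)
  finally show ?thesis using u' by simp
qed

end

context rg
begin

definition isF :: "'a list \<Rightarrow> 'a \<Rightarrow> bool" where
  "isF Z a \<longleftrightarrow> (\<exists>A B. Z = A @ a # B \<and> (\<forall>x\<in>set A. E a x))"

definition isL :: "'a list \<Rightarrow> 'a \<Rightarrow> bool" where
  "isL Z a \<longleftrightarrow> (\<exists>A B. Z = A @ a # B \<and> (\<forall>x\<in>set B. E a x))"

definition CZ :: "'a list \<Rightarrow> 'a \<Rightarrow> bool" where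
  "CZ Z a \<longleftrightarrow> (\<forall>x\<in>set Z. E a x)"

lemma isL_rev: "isL (rev Z) a = isF Z a"
  unfolding isL_def isF_def
proof
  assume "\<exists>A B. rev Z = A @ a # B \<and> (\<forall>x\<in>set B. E a x)"
  then obtain A B where h: "rev Z = A @ a # B" "\<forall>x\<in>set B. E a x" by blast
  then have "Z = rev B @ a # rev A \<and> (\<forall>x\<in>set (rev B). E a x)"
    by (metis rev_rev_ident rev.simps(2) rev_append append.assoc append_Cons append_Nil set_rev)
  then show "\<exists>A B. Z = A @ a # B \<and> (\<forall>x\<in>set A. E a x)" by blast
next
  assume "\<exists>A B. Z = A @ a # B \<and> (\<forall>x\<in>set A. E a x)"
  then obtain A B where h: "Z = A @ a # B" "\<forall>x\<in>set A. E a x" by blast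
  have "rev Z = rev B @ a # rev A \<and> (\<forall>x\<in>set (rev A). E a x)" using h by simp
  then show "\<exists>A B. rev Z = A @ a # B \<and> (\<forall>x\<in>set B. E a x)" by blast
qed

lemma isF_rev: "isF (rev Z) a = isL Z a"
  using isL_rev[of "rev Z"] by simp

lemma CZ_rev: "CZ (rev Z) a = CZ Z a" unfolding CZ_def by simp

lemma isL_snoc: "isL (X @ [a]) x \<Longrightarrow> x = a \<or> E x a"
  unfolding isL_def
proof -
  assume "\<exists>A B. X @ [a] = A @ x # B \<and> (\<forall>y\<in>set B. E x y)"
  then obtain A B where eq: "X @ [a] = A @ x # B" and c: "\<forall>y\<in>set B. E x y" by blast
  show "x = a \<or> E x a"
  proof (cases B rule: rev_cases)
    case Nil then show ?thesis using eq by simp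
  next
    case (snoc B' y)
    then have "y = a" using eq by (metis append_Cons append_assoc last_snoc)
    then show ?thesis using c snoc by simp
  qed
qed

lemma isF_Cons: "isF (a # X) x \<Longrightarrow> x = a \<or> E x a"
  using isL_snoc[of "rev X" a x] isL_rev[of "a # X" x] by simp

lemma isF_set: "isF Z a \<Longrightarrow> a \<in> set Z" unfolding isF_def by auto
lemma isL_set: "isL Z a \<Longrightarrow> a \<in> set Z" unfolding isL_def by auto

lemma red_append:
  assumes rA: "red A" and rB: "red B" and d: "\<forall>a. \<not> (isL A a \<and> isF B a)"
  shows "red (A @ B)"
proof (rule ccontr)
  assume "\<not> red (A @ B)"
  then obtain p1 a p2 p3 where eq: "A @ B = p1 @ a # p2 @ a # p3" and ca: "\<forall>x\<in>set p2. E a x"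
    unfolding red_def by blast
  show False
  proof (cases "length A \<le> length p1")
    case True
    then obtain m where m2: "B = m @ a # p2 @ a # p3"
      using eq by (auto simp: append_eq_append_conv_if)
    then show False using rB bad_notred[OF ca] by metis
  next
    case False
    then have "take (length p1) A = p1" and "drop (length p1) A @ B = a # p2 @ a # p3"
      using eq by (auto simp: append_eq_append_conv_if)
    then obtain q1 where A: "A = p1 @ a # q1" and q: "q1 @ B = p2 @ a # p3"
      using False by (cases "drop (length p1) A") (auto, metis append_take_drop_id)
    show False
    proof (cases "length q1 \<le> length p2")
      case True
      then obtain m where m1: "p2 = q1 @ m" and m2: "B = m @ a # p3"
        using q by (auto simp: append_eq_append_conv_if) (metis append_take_drop_id)
      have "isL A a" unfolding isL_def using A ca m1 by auto
      moreover have "isF B a" unfolding isF_def using m2 ca m1 by auto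
      ultimately show False using d by blast
    next
      case False
      then have "take (length p2) q1 = p2" and "drop (length p2) q1 @ B = a # p3"
        using q by (auto simp: append_eq_append_conv_if)
      then obtain q2 where q1: "q1 = p2 @ a # q2"
        using False by (cases "drop (length p2) q1") (auto, metis append_take_drop_id)
      have "A = p1 @ a # p2 @ a # q2" using A q1 by simp
      then show False using rA bad_notred[OF ca] by metis
    qed
  qed
qed

lemma red_single[simp]: "red [a]" unfolding red_def by (auto simp: append_eq_Cons_conv Cons_eq_append_conv)

lemma isL_single: "isL [p] a \<Longrightarrow> a = p" unfolding isL_def by (auto simp: Cons_eq_append_conv)
lemma isF_single: "isF [p] a \<Longrightarrow> a = p" unfolding isF_def by (auto simp: Cons_eq_append_conv)

lemma SC_grow:
  assumes r: "red Z" and nF: "\<not> isF Z p" and nL: "\<not> isL Z p" and nC: "\<not> CZ Z p"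
  shows "red (p # Z @ [p])"
proof -
  have r1: "red ([p] @ Z)" using red_append[OF red_single r] isL_single nF by blast
  have "\<not> isL (p # Z) p"
  proof
    assume "isL (p # Z) p"
    then obtain A B where eq: "p # Z = A @ p # B" and c: "\<forall>x\<in>set B. E p x" unfolding isL_def by blast
    show False
    proof (cases A)
      case Nil then show False using eq c nC unfolding CZ_def by simp
    next
      case (Cons y A')
      then have "Z = A' @ p # B" using eq by simp
      then show False using nL c unfolding isL_def by blast
    qed
  qed
  then have "red ((p # Z) @ [p])" using red_append[OF _ red_single] r1 isF_single by fastforce
  then show ?thesis by simp
qed

lemma SC_first:
  assumes p: "p \<in> V" and Z: "Z = A @ p # B" and c: "\<forall>x\<in>set A. E p x"
  shows "req (p # Z @ [p]) (A @ B @ [p])"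
proof -
  have "req ([] @ p # A @ (p # B @ [p])) ([] @ A @ p # (p # B @ [p]))" using req_commute[OF c] .
  moreover have "req (A @ p # p # B @ [p]) (A @ B @ [p])" using req_cancel[OF p] by simp
  ultimately show ?thesis using Z req_trans by simp
qed

lemma SC_last:
  assumes p: "p \<in> V" and Z: "Z = A @ p # B" and c: "\<forall>x\<in>set B. E p x"
  shows "req (p # Z @ [p]) (p # A @ B)"
proof -
  have "req ((p # A) @ p # B @ [p]) ((p # A) @ B @ p # [p])" using req_commute[OF c] .
  moreover have "req ((p # A @ B) @ p # p # []) ((p # A @ B) @ [])" using req_cancel[OF p] .
  ultimately show ?thesis using Z req_trans by simp
qed

lemma SC_C:
  assumes p: "p \<in> V" and c: "CZ Z p"
  shows "req (p # Z @ [p]) Z"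
proof -
  have "req ([] @ p # Z @ [p]) ([] @ Z @ p # [p])" using req_commute c unfolding CZ_def by blast
  moreover have "req (Z @ p # p # []) (Z @ [])" using req_cancel[OF p] .
  ultimately show ?thesis using req_trans by simp
qed

lemma TR:
  assumes X: "X \<in> lists V" and p: "p \<in> V"
  shows "len (p # X @ [p]) = len X + 2 \<or> len (p # X @ [p]) \<le> len X"
proof -
  obtain Z where Z: "Z \<in> lists V" "red Z" "req Z X" "length Z = len X" using red_rep[OF X] by blast
  have e: "len (p # X @ [p]) = len (p # Z @ [p])"
    using req_len_eq req_ctx[OF Z(3), of "[p]" "[p]"] by simp
  have ZV: "p # Z @ [p] \<in> lists V" using Z p by simp
  show ?thesis
  proof (cases "isF Z p")
    case True
    then obtain A B where AB: "Z = A @ p # B" "\<forall>x\<in>set A. E p x" unfolding isF_def by blast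
    have "len (p # Z @ [p]) = len (A @ B @ [p])" using req_len_eq SC_first[OF p AB] by simp
    also have "\<dots> \<le> length (A @ B @ [p])" using len_le[of "A @ B @ [p]"] Z(1) AB p by simp
    finally show ?thesis using e AB Z(4) by simp
  next
    case nF: False
    show ?thesis
    proof (cases "isL Z p")
      case True
      then obtain A B where AB: "Z = A @ p # B" "\<forall>x\<in>set B. E p x" unfolding isL_def by blast
      have "len (p # Z @ [p]) = len (p # A @ B)" using req_len_eq SC_last[OF p AB] by simp
      also have "\<dots> \<le> length (p # A @ B)" using len_le[of "p # A @ B"] Z(1) AB p by simp
      finally show ?thesis using e AB Z(4) by simp
    next
      case nL: False
      show ?thesis
      proof (cases "CZ Z p")
        case True
        then show ?thesis using e req_len_eq[OF SC_C[OF p True]] Z(4) red_len[OF Z(2) Z(1)] by simp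
      next
        case False
        have "red (p # Z @ [p])" using SC_grow[OF Z(2) nF nL False] .
        then show ?thesis using e red_len ZV Z(4) by simp
      qed
    qed
  qed
qed

lemma ZS:
  assumes r: "red Z" and Z: "Z \<in> lists V" and p: "p \<in> V" and l: "len (p # Z @ [p]) = length Z"
  shows "\<exists>Z'. red Z' \<and> Z' \<in> lists V \<and> req Z' (p # Z @ [p]) \<and> set Z' = set Z \<and> length Z' = length Z \<and>
    ((\<exists>A B. Z = A @ p # B \<and> (\<forall>x\<in>set A. E p x) \<and> Z' = A @ B @ [p]) \<or>
     (\<exists>A B. Z = A @ p # B \<and> (\<forall>x\<in>set B. E p x) \<and> Z' = p # A @ B) \<or>
     (CZ Z p \<and> Z' = Z))"
proof (cases "isF Z p")
  case True
  then obtain A B where AB: "Z = A @ p # B" "\<forall>x\<in>set A. E p x" unfolding isF_def by blast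
  have q: "req (p # Z @ [p]) (A @ B @ [p])" using SC_first[OF p AB] .
  have V': "A @ B @ [p] \<in> lists V" using Z AB p by simp
  have "len (A @ B @ [p]) = length (A @ B @ [p])" using req_len_eq[OF q] l AB by simp
  then have "red (A @ B @ [p])" using red_iff_len[OF V'] by simp
  then show ?thesis using V' q AB req_sym by (intro exI[of _ "A @ B @ [p]"]) auto
next
  case nF: False
  show ?thesis
  proof (cases "isL Z p")
    case True
    then obtain A B where AB: "Z = A @ p # B" "\<forall>x\<in>set B. E p x" unfolding isL_def by blast
    have q: "req (p # Z @ [p]) (p # A @ B)" using SC_last[OF p AB] .
    have V': "p # A @ B \<in> lists V" using Z AB p by simp
    have "len (p # A @ B) = length (p # A @ B)" using req_len_eq[OF q] l AB by simp
    then have "red (p # A @ B)" using red_iff_len[OF V'] by simp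
    then show ?thesis using V' q AB req_sym by (intro exI[of _ "p # A @ B"]) auto
  next
    case nL: False
    show ?thesis
    proof (cases "CZ Z p")
      case True
      then show ?thesis using r Z req_sym[OF SC_C[OF p True]] by (intro exI[of _ Z]) auto
    next
      case False
      have "red (p # Z @ [p])" using SC_grow[OF r nF nL False] .
      then have "len (p # Z @ [p]) = length Z + 2" using red_len Z p by simp
      then show ?thesis using l by simp
    qed
  qed
qed

lemma cadj: "compl_adj V E a b \<Longrightarrow> a \<in> V \<and> b \<in> V \<and> a \<noteq> b \<and> \<not> E a b \<and> \<not> E b a"
  unfolding compl_adj_def using E_sym by blast

lemma cadj_sym: "compl_adj V E a b \<Longrightarrow> compl_adj V E b a"
  unfolding compl_adj_def using E_sym by blast

lemma GP:
  assumes r: "red (p # Z @ [p])" and a: "compl_adj V E p q"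
  shows "red (q # (p # Z @ [p]) @ [q])"
proof (rule SC_grow[OF r])
  show "\<not> isF (p # Z @ [p]) q" using isF_Cons[of p "Z @ [p]" q] cadj[OF a] by auto
  show "\<not> isL (p # Z @ [p]) q" using isL_snoc[of "p # Z" p q] cadj[OF a] by auto
  show "\<not> CZ (p # Z @ [p]) q" using cadj[OF a] unfolding CZ_def by auto
qed

lemma isL_both: assumes a: "isL Z a" and b: "isL Z b" and ne: "a \<noteq> b" shows "E a b"
proof -
  obtain A B where AB: "Z = A @ a # B" "\<forall>x\<in>set B. E a x" using a unfolding isL_def by blast
  obtain A' B' where AB': "Z = A' @ b # B'" "\<forall>x\<in>set B'. E b x" using b unfolding isL_def by blast
  show ?thesis
  proof (cases "length A < length A'")
    case True
    have "b \<in> set B"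
    proof -
      have "Z ! length A' = b" using AB' by simp
      moreover have "Z ! length A' = B ! (length A' - length A - 1)" using AB True
        by (simp add: nth_append nth_Cons')
      moreover have "length A' < length Z" using AB' by simp
      then have "length A' - length A - 1 < length B" using AB True by simp
      ultimately show ?thesis by (metis nth_mem)
    qed
    then show ?thesis using AB by simp
  next
    case False
    have neq: "length A \<noteq> length A'"
    proof
      assume "length A = length A'"
      then have "Z ! length A = a" "Z ! length A = b" using AB AB' by auto
      then show False using ne by simp
    qed
    then have lt: "length A' < length A" using False by simp
    have "a \<in> set B'"
    proof -
      have "Z ! length A = a" using AB by simp
      moreover have "Z ! length A = B' ! (length A - length A' - 1)" using AB' lt
        by (simp add: nth_append nth_Cons')
      moreover have "length A < length Z" using AB by simp
      then have "length A - length A' - 1 < length B'" using AB' lt by simp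
      ultimately show ?thesis by (metis nth_mem)
    qed
    then show ?thesis using AB' E_sym by blast
  qed
qed

end

context rg
begin

lemma wk_single[simp]: "compl_walk V E [a] \<longleftrightarrow> a \<in> V"
  unfolding compl_walk_def by simp

lemma wk_Cons2: "compl_walk V E (a # b # xs) \<longleftrightarrow> compl_adj V E a b \<and> compl_walk V E (b # xs)"
proof
  assume h: "compl_walk V E (a # b # xs)"
  have "compl_adj V E a b" using h unfolding compl_walk_def by (metis Suc_less_eq length_Cons nth_Cons_0 nth_Cons_Suc zero_less_Suc)
  moreover have "compl_walk V E (b # xs)" unfolding compl_walk_def
  proof (intro conjI allI impI)
    show "b # xs \<noteq> []" by simp
    show "set (b # xs) \<subseteq> V" using h unfolding compl_walk_def by auto
    fix i assume "Suc i < length (b # xs)"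
    then have "Suc (Suc i) < length (a # b # xs)" by simp
    then have "compl_adj V E ((a#b#xs)!Suc i) ((a#b#xs)! Suc (Suc i))" using h unfolding compl_walk_def by blast
    then show "compl_adj V E ((b # xs) ! i) ((b # xs) ! Suc i)" by simp
  qed
  ultimately show "compl_adj V E a b \<and> compl_walk V E (b # xs)" by simp
next
  assume h: "compl_adj V E a b \<and> compl_walk V E (b # xs)"
  then have aV: "a \<in> V" unfolding compl_adj_def by simp
  show "compl_walk V E (a # b # xs)" unfolding compl_walk_def
  proof (intro conjI allI impI)
    show "a # b # xs \<noteq> []" by simp
    show "set (a # b # xs) \<subseteq> V" using h aV unfolding compl_walk_def by auto
    fix i assume i: "Suc i < length (a # b # xs)"
    show "compl_adj V E ((a # b # xs) ! i) ((a # b # xs) ! Suc i)"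
    proof (cases i)
      case 0 then show ?thesis using h by simp
    next
      case (Suc j)
      then show ?thesis using h i unfolding compl_walk_def by simp
    qed
  qed
qed

lemma wk_lists: "compl_walk V E W \<Longrightarrow> W \<in> lists V"
  unfolding compl_walk_def by auto

lemma wk_ne: "compl_walk V E W \<Longrightarrow> W \<noteq> []"
  unfolding compl_walk_def by auto

lemma wk_append: "compl_walk V E xs \<Longrightarrow> compl_walk V E (last xs # ys) \<Longrightarrow> compl_walk V E (xs @ ys)"
proof (induction xs rule: induct_list012)
  case 1 then show ?case by (simp add: compl_walk_def)
next
  case (2 x) then show ?case by simp
next
  case (3 x y zs)
  have "compl_walk V E ((y # zs) @ ys)" using 3 wk_Cons2 by simp
  then show ?case using 3 wk_Cons2 by simp
qed

lemma wk_prefix: "compl_walk V E (xs @ ys) \<Longrightarrow> xs \<noteq> [] \<Longrightarrow> compl_walk V E xs"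
proof (induction xs rule: induct_list012)
  case 1 then show ?case by simp
next
  case (2 x) then show ?case using wk_lists cadj by (cases ys) (auto simp: wk_Cons2)
next
  case (3 x y zs) then show ?case by (simp add: wk_Cons2)
qed

lemma wk_suffix: "compl_walk V E (xs @ ys) \<Longrightarrow> ys \<noteq> [] \<Longrightarrow> compl_walk V E ys"
proof (induction xs)
  case Nil then show ?case by simp
next
  case (Cons x xs)
  then show ?case by (cases "xs @ ys") (auto simp: wk_Cons2)
qed

lemma wk_junction: "compl_walk V E (xs @ y # ys) \<Longrightarrow> xs \<noteq> [] \<Longrightarrow> compl_adj V E (last xs) y"
proof (induction xs rule: induct_list012)
  case 1 then show ?case by simp
next
  case (2 x) then show ?case by (simp add: wk_Cons2)
next
  case (3 x z zs) then show ?case by (simp add: wk_Cons2)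
qed

lemma walk_red: "compl_walk V E W \<Longrightarrow> red W"
proof (rule ccontr)
  assume w: "compl_walk V E W" and "\<not> red W"
  then obtain u1 a u2 u3 where eq: "W = u1 @ a # u2 @ a # u3" and c: "\<forall>x\<in>set u2. E a x"
    unfolding red_def by blast
  show False
  proof (cases u2)
    case Nil
    then have "compl_walk V E ((u1 @ [a]) @ a # u3)" using w eq by simp
    then have "compl_adj V E a a" using wk_junction by fastforce
    then show False using cadj by blast
  next
    case (Cons x u2')
    then have "compl_walk V E ((u1 @ [a]) @ x # u2' @ a # u3)" using w eq by simp
    then have "compl_adj V E a x" using wk_junction by fastforce
    then show False using cadj c Cons by auto
  qed
qed

lemma walk_isF: "compl_walk V E W \<Longrightarrow> isF W a \<Longrightarrow> a = hd W"
proof -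
  assume w: "compl_walk V E W" and "isF W a"
  then obtain A B where eq: "W = A @ a # B" and c: "\<forall>x\<in>set A. E a x" unfolding isF_def by blast
  show "a = hd W"
  proof (cases A)
    case Nil then show ?thesis using eq by simp
  next
    case (Cons y A')
    then have "compl_adj V E (last A) a" using wk_junction w eq by blast
    moreover have "last A \<in> set A" using Cons by simp
    ultimately show ?thesis using c cadj E_sym by blast
  qed
qed

lemma wk_replicate:
  assumes w: "compl_walk V E ts" and c: "compl_adj V E (last ts) (hd ts)"
  shows "compl_walk V E (concat (replicate (Suc L) ts))"
proof (induction L)
  case 0 then show ?case using w by simp
next
  case (Suc L)
  have ne: "ts \<noteq> []" using wk_ne[OF w] .
  have h: "hd (concat (replicate (Suc L) ts)) = hd ts" using ne by simp
  obtain r where r: "concat (replicate (Suc L) ts) = hd ts # r" using ne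
    by (cases ts) auto
  have "compl_walk V E (last ts # concat (replicate (Suc L) ts))"
    using Suc c r wk_Cons2 by simp
  then have "compl_walk V E (ts @ concat (replicate (Suc L) ts))" using wk_append w by blast
  then show ?case by simp
qed

lemma walk_path: "(compl_adj V E)\<^sup>*\<^sup>* a b \<Longrightarrow> a \<in> V \<Longrightarrow> \<exists>Q. compl_walk V E (a # Q) \<and> last (a # Q) = b"
proof (induction rule: rtranclp_induct)
  case base then show ?case by (intro exI[of _ "[]"]) simp
next
  case (step y z)
  then obtain Q where Q: "compl_walk V E (a # Q)" "last (a # Q) = y" by blast
  have "compl_walk V E [y, z]" using step(2) cadj wk_Cons2 by simp
  then have "compl_walk V E ((a # Q) @ [z])" using wk_append[OF Q(1)] Q(2) by simp
  then show ?case by (intro exI[of _ "Q @ [z]"]) simp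
qed

lemma first_hit: "R\<^sup>*\<^sup>* x y \<Longrightarrow> x \<notin> A \<Longrightarrow> y \<in> A \<Longrightarrow> \<exists>u v. R u v \<and> u \<notin> A \<and> v \<in> A"
  by (induction rule: rtranclp_induct) auto

end

locale rgc = rg +
  assumes conn: "compl_connected V E" and c3: "card V \<ge> 3"
begin

lemma conn': "a \<in> V \<Longrightarrow> b \<in> V \<Longrightarrow> (compl_adj V E)\<^sup>*\<^sup>* a b"
  using conn unfolding compl_connected_def by blast

lemma other: "a \<in> V \<Longrightarrow> \<exists>d\<in>V. d \<noteq> a"
proof -
  assume a: "a \<in> V"
  have "\<not> V \<subseteq> {a}"
  proof
    assume "V \<subseteq> {a}"
    then have "card V \<le> card {a}" by (intro card_mono) auto
    then show False using c3 by simp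
  qed
  then show ?thesis by blast
qed

lemma nbr: "a \<in> V \<Longrightarrow> \<exists>c. compl_adj V E a c"
proof -
  assume a: "a \<in> V"
  obtain d where d: "d \<in> V" "d \<noteq> a" using other[OF a] by blast
  have "(compl_adj V E)\<^sup>*\<^sup>* a d" using conn' a d by simp
  then show ?thesis using d(2) by (metis converse_rtranclpE)
qed

lemma walk_to: "a \<in> V \<Longrightarrow> b \<in> V \<Longrightarrow> \<exists>Q. Q \<noteq> [] \<and> compl_walk V E (a # Q) \<and> last Q = b"
proof -
  assume a: "a \<in> V" and b: "b \<in> V"
  obtain c where c: "compl_adj V E a c" using nbr[OF a] by blast
  have cV: "c \<in> V" using cadj[OF c] by simp
  obtain Q where Q: "compl_walk V E (c # Q)" "last (c # Q) = b" using walk_path[OF conn'[OF cV b] cV] by blast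
  have "compl_walk V E (a # c # Q)" using c Q wk_Cons2 by simp
  then show ?thesis using Q by (intro exI[of _ "c # Q"]) simp
qed

lemma three: "\<exists>p q t. compl_adj V E p q \<and> compl_adj V E t p \<and> t \<noteq> q"
proof -
  have "V \<noteq> {}" using c3 by auto
  then obtain a where a: "a \<in> V" by blast
  obtain b where ab: "compl_adj V E a b" using nbr[OF a] by blast
  have "\<not> V \<subseteq> {a, b}"
  proof
    assume "V \<subseteq> {a, b}"
    then have "card V \<le> card {a, b}" by (simp add: card_mono)
    also have "\<dots> \<le> 2" by (simp add: card_insert_le_m1)
    finally show False using c3 by simp
  qed
  then obtain c where c: "c \<in> V" "c \<notin> {a, b}" by blast
  obtain u v where uv: "compl_adj V E u v" "u \<notin> {a, b}" "v \<in> {a, b}"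
    using first_hit[OF conn'[OF c(1) a] c(2)] by auto
  show ?thesis
  proof (cases "v = a")
    case True
    then show ?thesis using ab uv by blast
  next
    case False
    then have "v = b" using uv by simp
    then show ?thesis using ab uv cadj_sym by blast
  qed
qed

lemma notL: "\<exists>v\<in>V. \<not> isL Z v"
proof -
  have "V \<noteq> {}" using c3 by auto
  then obtain a where a: "a \<in> V" by blast
  obtain b where ab: "compl_adj V E a b" using nbr[OF a] by blast
  show ?thesis using isL_both[of Z a b] cadj[OF ab] by blast
qed

lemma cover: "a \<in> V \<Longrightarrow> set vs \<subseteq> V \<Longrightarrow> \<exists>Q. compl_walk V E (a # Q) \<and> set vs \<subseteq> set (a # Q)"
proof (induction vs)
  case Nil then show ?case by (intro exI[of _ "[]"]) simp
next
  case (Cons v vs)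
  then obtain Q where Q: "compl_walk V E (a # Q)" "set vs \<subseteq> set (a # Q)" by auto
  have lV: "last (a # Q) \<in> V" using wk_lists[OF Q(1)] by (metis in_lists_conv_set last_in_set list.distinct(1))
  obtain Q' where Q': "compl_walk V E (last (a # Q) # Q')" "last (last (a # Q) # Q') = v"
    using walk_path[OF conn'[OF lV] lV] Cons.prems by auto
  have "compl_walk V E ((a # Q) @ Q')" using wk_append[OF Q(1) Q'(1)] .
  moreover have "v \<in> set ((a # Q) @ Q')" using Q'(2)
    by (metis Un_iff last_ConsL last_ConsR last_in_set list.distinct(1) list.set_intros(1) set_append)
  ultimately show ?case using Q(2) by (intro exI[of _ "Q @ Q'"]) auto
qed

lemma closed_cover: "\<exists>ts. compl_closed_walk V E ts \<and> set ts = V"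
proof -
  have "V \<noteq> {}" using c3 by auto
  then obtain a where a: "a \<in> V" by blast
  obtain vs where vs: "set vs = V" using finite_list[OF fin_V] by blast
  obtain Q1 where Q1: "compl_walk V E (a # Q1)" "V \<subseteq> set (a # Q1)" using cover[OF a] vs by auto
  have lV: "last (a # Q1) \<in> V" using wk_lists[OF Q1(1)] by (metis in_lists_conv_set last_in_set list.distinct(1))
  obtain Q2 where Q2: "Q2 \<noteq> []" "compl_walk V E (last (a # Q1) # Q2)" "last Q2 = a"
    using walk_to[OF lV a] by blast
  define W where "W = (a # Q1) @ Q2"
  have W: "compl_walk V E W" using wk_append[OF Q1(1) Q2(2)] W_def by simp
  have lW: "last W = a" using Q2 W_def by simp
  define ts where "ts = butlast W"
  have Wts: "W = ts @ [a]" using lW W_def ts_def by (metis append_butlast_last_id list.distinct(1) append_is_Nil_conv)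
  have tsne: "ts \<noteq> []" using Q2(1) ts_def W_def by (cases Q2) auto
  have hd: "hd ts = a" using tsne Wts W_def by (metis append_Cons hd_append2 list.sel(1))
  have wt: "compl_walk V E ts" using wk_prefix[OF _ tsne] W Wts by simp
  have adj: "compl_adj V E (last ts) a" using wk_junction[of ts a "[]"] W Wts tsne by simp
  have "compl_closed_walk V E ts" unfolding compl_closed_walk_def using wt adj hd cadj_sym by simp
  moreover have "set ts = V"
  proof
    show "set ts \<subseteq> V" using wk_lists[OF wt] by auto
    show "V \<subseteq> set ts"
    proof
      fix x assume x: "x \<in> V"
      then have "x \<in> set W" using Q1(2) W_def by auto
      then have "x \<in> set ts \<or> x = a" using Wts by auto
      then show "x \<in> set ts" using hd tsne by (metis list.set_sel(1))
    qed
  qed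
  ultimately show ?thesis by blast
qed

end

context rg
begin

definition grows :: "'a list \<Rightarrow> 'a \<Rightarrow> bool" where
  "grows X p \<longleftrightarrow> len (p # X @ [p]) = len X + 2"

lemma req_wrap: "req X X' \<Longrightarrow> req (p # X @ [p]) (p # X' @ [p])"
  using req_ctx[of X X' "[p]" "[p]"] by simp

lemma grows_req: "req X X' \<Longrightarrow> grows X p = grows X' p"
  unfolding grows_def using req_len_eq req_wrap by metis

lemma take_lists: "Q \<in> lists V \<Longrightarrow> take j Q \<in> lists V"
  by (auto dest: in_set_takeD)

lemma cw_take_Suc: "j < length Q \<Longrightarrow> cw Z (take (Suc j) Q) = Q ! j # cw Z (take j Q) @ [Q ! j]"
  by (simp add: take_Suc_conv_app_nth cw_snoc)

lemma driver:
  assumes Z: "Z \<in> lists V" "red Z" and Q: "Q \<in> lists V"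
  shows "(\<exists>j<length Q. grows (cw Z (take j Q)) (Q!j)) \<or>
         (\<exists>j<length Q. len (cw Z (take (Suc j) Q)) < length Z) \<or>
         (\<forall>j\<le>length Q. len (cw Z (take j Q)) = length Z)"
proof -
  { assume n1: "\<not> (\<exists>j<length Q. grows (cw Z (take j Q)) (Q!j))"
      and n2: "\<not> (\<exists>j<length Q. len (cw Z (take (Suc j) Q)) < length Z)"
    have "\<forall>j\<le>length Q. len (cw Z (take j Q)) = length Z"
    proof (intro allI impI)
      fix j assume "j \<le> length Q"
      then show "len (cw Z (take j Q)) = length Z"
      proof (induction j)
        case 0 then show ?case using red_len Z by simp
      next
        case (Suc j)
        then have j: "j < length Q" by simp
        let ?X = "cw Z (take j Q)"
        have XV: "?X \<in> lists V" using cw_lists[OF Z(1) take_lists[OF Q]] .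
        have pV: "Q ! j \<in> V" using Q j by (meson in_listsD nth_mem)
        have e: "cw Z (take (Suc j) Q) = Q ! j # ?X @ [Q ! j]" using cw_take_Suc[OF j] .
        have IH: "len ?X = length Z" using Suc by simp
        have "\<not> grows ?X (Q ! j)" using n1 j by blast
        then have "len (Q ! j # ?X @ [Q ! j]) \<le> len ?X" using TR[OF XV pV] unfolding grows_def by blast
        moreover have "\<not> len (cw Z (take (Suc j) Q)) < length Z" using n2 j by blast
        ultimately show ?case using e IH by simp
      qed
    qed }
  then show ?thesis by blast
qed

lemma zero_run:
  assumes Z: "Z \<in> lists V" "red Z" and Q: "Q \<in> lists V"
    and h: "\<forall>j\<le>length Q. len (cw Z (take j Q)) = length Z"
  shows "\<exists>Z'. red Z' \<and> Z' \<in> lists V \<and> req Z' (cw Z Q) \<and> set Z' = set Z \<and> length Z' = length Z"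
  using Q h
proof (induction Q rule: rev_induct)
  case Nil then show ?case using Z by (intro exI[of _ Z]) simp
next
  case (snoc p Q)
  have QV: "Q \<in> lists V" and pV: "p \<in> V" using snoc.prems by auto
  have hQ: "\<forall>j\<le>length Q. len (cw Z (take j Q)) = length Z"
  proof (intro allI impI)
    fix j assume j: "j \<le> length Q"
    then have "take j (Q @ [p]) = take j Q" by simp
    then show "len (cw Z (take j Q)) = length Z" using snoc.prems(2)[rule_format, of j] j by simp
  qed
  obtain Z1 where Z1: "red Z1" "Z1 \<in> lists V" "req Z1 (cw Z Q)" "set Z1 = set Z" "length Z1 = length Z"
    using snoc.IH[OF QV hQ] by blast
  have r1: "req (p # Z1 @ [p]) (cw Z (Q @ [p]))" using req_wrap[OF Z1(3)] cw_snoc by simp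
  have "len (cw Z (Q @ [p])) = length Z" using snoc.prems(2) by (metis le_refl take_all)
  then have "len (p # Z1 @ [p]) = length Z1" using req_len_eq[OF r1] Z1 by simp
  then obtain Z' where Z': "red Z'" "Z' \<in> lists V" "req Z' (p # Z1 @ [p])" "set Z' = set Z1" "length Z' = length Z1"
    using ZS[OF Z1(1) Z1(2) pV] by blast
  then show ?case using Z1 r1 req_trans by (intro exI[of _ Z']) auto
qed

definition phi :: "'a \<Rightarrow> 'a \<Rightarrow> 'a \<Rightarrow> 'a list \<Rightarrow> nat" where
  "phi p q t Z = length (filter (\<lambda>x. x = p \<or> x = q) (takeWhile (\<lambda>x. x \<noteq> t) Z))"

lemma phi_le: "phi p q t Z \<le> length Z"
  unfolding phi_def by (meson dual_order.trans length_filter_le length_takeWhile_le)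

lemma tw_app1: "t \<in> set A \<Longrightarrow> takeWhile (\<lambda>x. x \<noteq> t) (A @ B) = takeWhile (\<lambda>x. x \<noteq> t) A"
  by (induction A) auto

lemma tw_app2: "t \<notin> set A \<Longrightarrow> takeWhile (\<lambda>x. x \<noteq> t) (A @ B) = A @ takeWhile (\<lambda>x. x \<noteq> t) B"
  by (induction A) auto

lemma phi_q:
  assumes Z: "Z = A @ q # B" and tq: "t \<noteq> q" and t: "t \<in> set Z"
  shows "phi p q t (A @ B @ [q]) \<le> phi p q t Z"
proof (cases "t \<in> set A")
  case True
  then show ?thesis unfolding phi_def using Z tw_app1[OF True] by (metis order_refl)
next
  case False
  then have tB: "t \<in> set B" using Z t tq by auto
  have "takeWhile (\<lambda>x. x \<noteq> t) Z = A @ q # takeWhile (\<lambda>x. x \<noteq> t) B"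
    using Z tw_app2[OF False] tq by simp
  moreover have "takeWhile (\<lambda>x. x \<noteq> t) (A @ B @ [q]) = A @ takeWhile (\<lambda>x. x \<noteq> t) B"
    using tw_app2[OF False] tw_app1[OF tB] by simp
  ultimately show ?thesis unfolding phi_def by simp
qed

lemma phi_p:
  assumes Z: "Z = A @ p # B" and c: "\<forall>x\<in>set A. E p x" and tp: "\<not> E p t" "t \<noteq> p" and t: "t \<in> set Z"
  shows "phi p q t (A @ B @ [p]) < phi p q t Z"
proof -
  have nA: "t \<notin> set A" using c tp by auto
  then have tB: "t \<in> set B" using Z t tp by auto
  have "takeWhile (\<lambda>x. x \<noteq> t) Z = A @ p # takeWhile (\<lambda>x. x \<noteq> t) B"
    using Z tw_app2[OF nA] tp by simp
  moreover have "takeWhile (\<lambda>x. x \<noteq> t) (A @ B @ [p]) = A @ takeWhile (\<lambda>x. x \<noteq> t) B"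
    using tw_app2[OF nA] tw_app1[OF tB] by simp
  ultimately show ?thesis unfolding phi_def by simp
qed

lemma bounce:
  assumes "Z1 \<in> lists V" "red Z1" "set Z1 = V" and pq: "compl_adj V E p q" and tp: "compl_adj V E t p" and tq: "t \<noteq> q"
    and "\<forall>x. isL Z1 x \<longrightarrow> x = p \<or> E x p"
    and "\<forall>j\<le>2*K. len (cw Z1 (take j (concat (replicate K [q,p])))) = length Z1"
  shows "K \<le> phi p q t Z1"
  using assms(1-3,7,8)
proof (induction K arbitrary: Z1)
  case 0 then show ?case by simp
next
  case (Suc K)
  have pV: "p \<in> V" and qV: "q \<in> V" and tV: "t \<in> V" using cadj pq tp by auto
  have npq: "\<not> E p q" "\<not> E q p" "p \<noteq> q" using cadj[OF pq] by auto
  have ntp: "\<not> E p t" "t \<noteq> p" using cadj[OF tp] by auto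
  define Bn where "Bn = concat (replicate K [q,p])"
  have Bs: "concat (replicate (Suc K) [q,p]) = [q,p] @ Bn" unfolding Bn_def by simp
  have h1: "len (q # Z1 @ [q]) = length Z1"
    using Suc.prems(5)[rule_format, of 1] Bs by (simp add: cw_def)
  obtain Z2 where Z2: "red Z2" "Z2 \<in> lists V" "req Z2 (q # Z1 @ [q])" "set Z2 = set Z1" "length Z2 = length Z1"
    and f2: "(\<exists>A B. Z1 = A @ q # B \<and> (\<forall>x\<in>set A. E q x) \<and> Z2 = A @ B @ [q]) \<or>
     (\<exists>A B. Z1 = A @ q # B \<and> (\<forall>x\<in>set B. E q x) \<and> Z2 = q # A @ B) \<or> (CZ Z1 q \<and> Z2 = Z1)"
    using ZS[OF Suc.prems(2) Suc.prems(1) qV h1] by blast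
  obtain A B where AB: "Z1 = A @ q # B" "Z2 = A @ B @ [q]"
  proof -
    { assume "\<exists>A B. Z1 = A @ q # B \<and> (\<forall>x\<in>set B. E q x) \<and> Z2 = q # A @ B"
      then have "isL Z1 q" unfolding isL_def by blast
      then have False using Suc.prems(4) npq by blast }
    moreover
    { assume "CZ Z1 q \<and> Z2 = Z1"
      then have "E q p" using Suc.prems(3) pV unfolding CZ_def by blast
      then have False using npq by simp }
    ultimately show ?thesis using f2 that by blast
  qed
  have le1: "phi p q t Z2 \<le> phi p q t Z1" using phi_q[OF AB(1)] tq Suc.prems(3) tV AB(2) by simp
  have r12: "req (cw Z1 [q,p]) (p # Z2 @ [p])"
    using req_wrap[OF req_sym[OF Z2(3)], of p] by (simp add: cw_def)
  have h2: "len (p # Z2 @ [p]) = length Z2"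
    using Suc.prems(5)[rule_format, of 2] Bs req_len_eq[OF r12] Z2(5) by simp
  obtain Z3 where Z3: "red Z3" "Z3 \<in> lists V" "req Z3 (p # Z2 @ [p])" "set Z3 = set Z2" "length Z3 = length Z2"
    and f3: "(\<exists>A B. Z2 = A @ p # B \<and> (\<forall>x\<in>set A. E p x) \<and> Z3 = A @ B @ [p]) \<or>
     (\<exists>A B. Z2 = A @ p # B \<and> (\<forall>x\<in>set B. E p x) \<and> Z3 = p # A @ B) \<or> (CZ Z2 p \<and> Z3 = Z2)"
    using ZS[OF Z2(1) Z2(2) pV h2] by blast
  obtain A' B' where AB': "Z2 = A' @ p # B'" "\<forall>x\<in>set A'. E p x" "Z3 = A' @ B' @ [p]"
  proof -
    { assume "\<exists>A B. Z2 = A @ p # B \<and> (\<forall>x\<in>set B. E p x) \<and> Z3 = p # A @ B"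
      then have "isL Z2 p" unfolding isL_def by blast
      then have "p = q \<or> E p q" using isL_snoc[of "A @ B" q p] AB(2) by simp
      then have False using npq by blast }
    moreover
    { assume "CZ Z2 p \<and> Z3 = Z2"
      then have "E p q" using AB(2) unfolding CZ_def by simp
      then have False using npq by simp }
    ultimately show ?thesis using f3 that by blast
  qed
  have lt: "phi p q t Z3 < phi p q t Z2"
    using phi_p[OF AB'(1) AB'(2) ntp] Suc.prems(3) Z2(4) tV AB'(3) by simp
  have m3: "\<forall>x. isL Z3 x \<longrightarrow> x = p \<or> E x p" using isL_snoc AB'(3) by (metis append_assoc)
  have r13: "req (cw Z1 [q,p]) Z3" using r12 req_sym[OF Z3(3)] req_trans by blast
  have h3: "\<forall>j\<le>2*K. len (cw Z3 (take j Bn)) = length Z3"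
  proof (intro allI impI)
    fix j assume j: "j \<le> 2*K"
    have "take (Suc (Suc j)) (concat (replicate (Suc K) [q,p])) = [q,p] @ take j Bn" using Bs by simp
    then have "len (cw Z1 ([q,p] @ take j Bn)) = length Z1"
      using Suc.prems(5)[rule_format, of "Suc (Suc j)"] j by simp
    moreover have "req (cw Z1 ([q,p] @ take j Bn)) (cw Z3 (take j Bn))"
      using cw_req[OF r13, of "take j Bn"] by (simp only: cw_append)
    ultimately show "len (cw Z3 (take j Bn)) = length Z3" using req_len_eq Z3(5) Z2(5) by simp
  qed
  have "K \<le> phi p q t Z3"
    using Suc.IH[OF Z3(2) Z3(1) _ m3] h3 Z3(4) Z2(4) Suc.prems(3) unfolding Bn_def by simp
  then show ?case using lt le1 by simp
qed

lemma bounce_back: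
  assumes "Z1 \<in> lists V" "red Z1" "set Z1 = V" and pq: "compl_adj V E p q" and tp: "compl_adj V E t p" and tq: "t \<noteq> q"
    and m: "\<forall>x. isF Z1 x \<longrightarrow> x = p \<or> E x p"
    and h: "\<forall>j\<le>2*K. len (cw Z1 (take j (concat (replicate K [q,p])))) = length Z1"
  shows "K \<le> length Z1"
proof -
  have "\<forall>j\<le>2*K. len (cw (rev Z1) (take j (concat (replicate K [q,p])))) = length (rev Z1)"
  proof (intro allI impI)
    fix j assume j: "j \<le> 2*K"
    have sub: "set (concat (replicate K [q,p])) \<subseteq> {q,p}" by (induction K) auto
    have pqV: "p \<in> V" "q \<in> V" using cadj[OF pq] by auto
    have "concat (replicate K [q,p]) \<in> lists V"
    proof (rule in_listsI, intro ballI)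
      fix x assume "x \<in> set (concat (replicate K [q,p]))"
      then have "x \<in> {q,p}" using sub by blast
      then show "x \<in> V" using pqV by blast
    qed
    then have cV: "cw Z1 (take j (concat (replicate K [q,p]))) \<in> lists V"
      using cw_lists[OF assms(1) take_lists] by blast
    have "len (cw (rev Z1) (take j (concat (replicate K [q,p]))))
        = len (rev (cw Z1 (take j (concat (replicate K [q,p])))))" by (simp only: cw_rev)
    also have "\<dots> = len (cw Z1 (take j (concat (replicate K [q,p]))))" using len_rev[OF cV] .
    also have "\<dots> = length Z1" using h j by blast
    finally show "len (cw (rev Z1) (take j (concat (replicate K [q,p])))) = length (rev Z1)" by simp
  qed
  moreover have "\<forall>x. isL (rev Z1) x \<longrightarrow> x = p \<or> E x p" using m isL_rev by simp
  moreover have "rev Z1 \<in> lists V" using assms(1) by (simp add: in_lists_conv_set)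
  moreover have "red (rev Z1)" using red_rev assms(2) by blast
  moreover have "set (rev Z1) = V" using assms(3) by simp
  ultimately have "K \<le> phi p q t (rev Z1)"
    using bounce[of "rev Z1" p q t K, OF _ _ _ pq tp tq] by blast
  then show ?thesis using phi_le[of p q t "rev Z1"] by simp
qed

end

context rgc
begin

lemma wk_bounce: "compl_adj V E p q \<Longrightarrow> compl_walk V E (p # concat (replicate K [q,p]))"
proof (induction K)
  case 0 then show ?case using cadj by simp
next
  case (Suc K)
  then show ?case using cadj_sym[OF Suc.prems] by (simp add: wk_Cons2)
qed

lemma set_Z_V:
  assumes Z: "Z \<in> lists V" "Z \<noteq> []" and h: "\<forall>t\<in>V. t \<in> set Z \<or> CZ Z t"
  shows "set Z = V"
proof
  show "set Z \<subseteq> V" using Z by auto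
  show "V \<subseteq> set Z"
  proof
    fix t assume t: "t \<in> V"
    show "t \<in> set Z"
    proof (rule ccontr)
      assume nt: "t \<notin> set Z"
      obtain s where s: "s \<in> set Z" using Z by (cases Z) auto
      have sV: "s \<in> V" using s Z by auto
      obtain u v where uv: "compl_adj V E u v" "u \<notin> set Z" "v \<in> set Z"
        using first_hit[OF conn'[OF t sV] nt s] by blast
      have "u \<in> V" using cadj[OF uv(1)] by simp
      then have "CZ Z u" using h uv(2) by blast
      then have "E u v" using uv(3) unfolding CZ_def by blast
      then show False using cadj[OF uv(1)] by simp
    qed
  qed
qed

lemma lemG:
  "Y \<in> lists V \<Longrightarrow> \<not> req Y [] \<Longrightarrow> r \<in> V \<Longrightarrow>
   \<exists>P. compl_walk V E (r # P) \<and> (\<exists>j<length P. grows (cw Y (take j P)) (P!j))"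
proof (induction "len Y" arbitrary: Y r rule: less_induct)
  case less
  obtain Z where Z: "Z \<in> lists V" "red Z" "req Z Y" "length Z = len Y" using red_rep[OF less.prems(1)] by blast
  have Zne: "Z \<noteq> []"
  proof
    assume "Z = []"
    then have "req Y []" using req_sym[OF Z(3)] by simp
    then show False using less.prems(2) by simp
  qed
  have transfer: "\<And>P j. grows (cw Z (take j P)) (P!j) \<Longrightarrow> grows (cw Y (take j P)) (P!j)"
    using grows_req cw_req[OF Z(3)] by blast
  have fromQ: "\<And>Q. compl_walk V E (r # Q) \<Longrightarrow>
      (\<forall>j\<le>length Q. len (cw Z (take j Q)) = length Z) \<or>
      (\<exists>P. compl_walk V E (r # P) \<and> (\<exists>j<length P. grows (cw Y (take j P)) (P!j)))"
  proof -
    fix Q assume Qw: "compl_walk V E (r # Q)"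
    have QV: "Q \<in> lists V" using wk_lists[OF Qw] by simp
    consider (g) "\<exists>j<length Q. grows (cw Z (take j Q)) (Q!j)"
      | (s) "\<exists>j<length Q. len (cw Z (take (Suc j) Q)) < length Z"
      | (z) "\<forall>j\<le>length Q. len (cw Z (take j Q)) = length Z"
      using driver[OF Z(1) Z(2) QV] by blast
    then show "(\<forall>j\<le>length Q. len (cw Z (take j Q)) = length Z) \<or>
      (\<exists>P. compl_walk V E (r # P) \<and> (\<exists>j<length P. grows (cw Y (take j P)) (P!j)))"
    proof cases
      case g then show ?thesis using Qw transfer by blast
    next
      case s
      then obtain j where j: "j < length Q" and lt: "len (cw Z (take (Suc j) Q)) < length Z" by blast
      define Y' where "Y' = cw Z (take (Suc j) Q)"
      have Y'V: "Y' \<in> lists V" unfolding Y'_def using cw_lists[OF Z(1) take_lists[OF QV]] .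
      have nY': "\<not> req Y' []"
      proof
        assume "req Y' []"
        then have "req Z []" using cw_triv[OF take_lists[OF QV]] Y'_def by blast
        then have "req Y []" using req_trans[OF req_sym[OF Z(3)]] by blast
        then show False using less.prems(2) by simp
      qed
      have rV: "Q ! j \<in> V" using QV j by (meson in_listsD nth_mem)
      obtain P' j' where P': "compl_walk V E (Q ! j # P')" "j' < length P'"
          "grows (cw Y' (take j' P')) (P' ! j')"
        using less.hyps[of Y', OF _ Y'V nY' rV] lt Z(4) Y'_def by auto
      define P where "P = take (Suc j) Q @ P'"
      have pre: "compl_walk V E (r # take (Suc j) Q)"
        using wk_prefix[of "r # take (Suc j) Q" "drop (Suc j) Q"] Qw by simp
      have lst: "last (r # take (Suc j) Q) = Q ! j" using j by (simp add: take_Suc_conv_app_nth)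
      have Pw: "compl_walk V E (r # P)" using wk_append[OF pre] P'(1) lst P_def by simp
      have lt1: "length (take (Suc j) Q) = Suc j" using j by simp
      have tk: "take (Suc j + j') P = take (Suc j) Q @ take j' P'" using lt1 P_def by simp
      have nt: "P ! (Suc j + j') = P' ! j'" using lt1 P_def by (metis nth_append_length_plus)
      have "grows (cw Z (take (Suc j + j') P)) (P ! (Suc j + j'))"
        using P'(3) tk nt Y'_def cw_append by simp
      moreover have "Suc j + j' < length P" using P'(2) lt1 P_def by simp
      ultimately show ?thesis using Pw transfer by blast
    next
      case z then show ?thesis by blast
    qed
  qed
  show ?case
  proof (cases "\<exists>t\<in>V. t \<notin> set Z \<and> \<not> CZ Z t")
    case True
    then obtain t where t: "t \<in> V" "t \<notin> set Z" "\<not> CZ Z t" by blast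
    obtain Q where Q: "Q \<noteq> []" "compl_walk V E (r # Q)" "last Q = t" using walk_to[OF less.prems(3) t(1)] by blast
    have QV: "Q \<in> lists V" using wk_lists[OF Q(2)] by simp
    { assume z: "\<forall>j\<le>length Q. len (cw Z (take j Q)) = length Z"
      define Q' where "Q' = butlast Q"
      have QQ: "Q = Q' @ [t]" using Q Q'_def by (metis append_butlast_last_id)
      have Q'V: "Q' \<in> lists V" using QV QQ by simp
      have z': "\<forall>j\<le>length Q'. len (cw Z (take j Q')) = length Z"
      proof (intro allI impI)
        fix j assume j: "j \<le> length Q'"
        then have "take j Q = take j Q'" using QQ by simp
        then show "len (cw Z (take j Q')) = length Z" using z j QQ by (metis le_SucI length_append_singleton)
      qed
      obtain Z' where Z': "red Z'" "Z' \<in> lists V" "req Z' (cw Z Q')" "set Z' = set Z" "length Z' = length Z"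
        using zero_run[OF Z(1) Z(2) Q'V z'] by blast
      have "red (t # Z' @ [t])"
      proof (rule SC_grow[OF Z'(1)])
        show "\<not> isF Z' t" using isF_set t(2) Z'(4) by blast
        show "\<not> isL Z' t" using isL_set t(2) Z'(4) by blast
        show "\<not> CZ Z' t" using t(3) Z'(4) unfolding CZ_def by simp
      qed
      then have "len (t # Z' @ [t]) = length Z + 2" using red_len Z'(2) t(1) Z'(5) by simp
      moreover have "req (t # Z' @ [t]) (cw Z Q)" using req_wrap[OF Z'(3)] QQ cw_snoc by simp
      moreover have "len (cw Z Q) = length Z" using z by (metis le_refl take_all)
      ultimately have False using req_len_eq by simp }
    then show ?thesis using fromQ[OF Q(2)] by blast
  next
    case False
    then have hZ: "\<forall>t\<in>V. t \<in> set Z \<or> CZ Z t" by blast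
    have sZ: "set Z = V" using set_Z_V[OF Z(1) Zne hZ] .
    obtain p q t where pqt: "compl_adj V E p q" "compl_adj V E t p" "t \<noteq> q" using three by blast
    have pV: "p \<in> V" using cadj[OF pqt(1)] by simp
    obtain Q0 where Q0: "Q0 \<noteq> []" "compl_walk V E (r # Q0)" "last Q0 = p" using walk_to[OF less.prems(3) pV] by blast
    define K where "K = Suc (length Z)"
    define Bn where "Bn = concat (replicate K [q,p])"
    define Q where "Q = Q0 @ Bn"
    have lB: "length Bn = 2 * K" unfolding Bn_def by (induction K) auto
    have Qw: "compl_walk V E (r # Q)"
    proof -
      have "last (r # Q0) = p" using Q0 by simp
      then show ?thesis using wk_append[OF Q0(2)] wk_bounce[OF pqt(1), of K] Q_def Bn_def by simp
    qed
    { assume z: "\<forall>j\<le>length Q. len (cw Z (take j Q)) = length Z"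
      define Q' where "Q' = butlast Q0"
      have QQ: "Q0 = Q' @ [p]" using Q0 Q'_def by (metis append_butlast_last_id)
      have Q0V: "Q0 \<in> lists V" using wk_lists[OF Q0(2)] by simp
      then have Q'V: "Q' \<in> lists V" using QQ by simp
      have z': "\<forall>j\<le>length Q'. len (cw Z (take j Q')) = length Z"
      proof (intro allI impI)
        fix j assume j: "j \<le> length Q'"
        then have "take j Q = take j Q'" using QQ Q_def by simp
        moreover have "j \<le> length Q" using j QQ Q_def by simp
        ultimately show "len (cw Z (take j Q')) = length Z" using z by metis
      qed
      obtain Zp where Zp: "red Zp" "Zp \<in> lists V" "req Zp (cw Z Q')" "set Zp = set Z" "length Zp = length Z"
        using zero_run[OF Z(1) Z(2) Q'V z'] by blast
      have rq0: "req (p # Zp @ [p]) (cw Z Q0)" using req_wrap[OF Zp(3)] QQ cw_snoc by simp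
      have "take (length Q0) Q = Q0" using Q_def by simp
      then have "len (cw Z Q0) = length Z" using z Q_def by (metis le_add1 length_append)
      then have h0: "len (p # Zp @ [p]) = length Zp" using req_len_eq[OF rq0] Zp(5) by simp
      obtain Z1 where Z1: "red Z1" "Z1 \<in> lists V" "req Z1 (p # Zp @ [p])" "set Z1 = set Zp" "length Z1 = length Zp"
        and f1: "(\<exists>A B. Zp = A @ p # B \<and> (\<forall>x\<in>set A. E p x) \<and> Z1 = A @ B @ [p]) \<or>
          (\<exists>A B. Zp = A @ p # B \<and> (\<forall>x\<in>set B. E p x) \<and> Z1 = p # A @ B) \<or> (CZ Zp p \<and> Z1 = Zp)"
        using ZS[OF Zp(1) Zp(2) pV h0] by blast
      have hB: "\<forall>j\<le>2*K. len (cw Z1 (take j Bn)) = length Z1"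
      proof (intro allI impI)
        fix j assume j: "j \<le> 2*K"
        have "take (length Q0 + j) Q = Q0 @ take j Bn" using Q_def by simp
        moreover have "length Q0 + j \<le> length Q" using j lB Q_def by simp
        ultimately have "len (cw Z (Q0 @ take j Bn)) = length Z" using z by metis
        moreover have "req (cw Z (Q0 @ take j Bn)) (cw Z1 (take j Bn))"
        proof -
          have "req (cw Z Q0) Z1" using rq0 Z1(3) req_sym req_trans by blast
          then show ?thesis using cw_req[of "cw Z Q0" Z1 "take j Bn"] by (simp only: cw_append)
        qed
        ultimately show "len (cw Z1 (take j Bn)) = length Z1" using req_len_eq Z1(5) Zp(5) by simp
      qed
      have sZ1: "set Z1 = V" using Z1(4) Zp(4) sZ by simp
      have False
      proof -
        consider (f) "\<exists>A B. Zp = A @ p # B \<and> (\<forall>x\<in>set A. E p x) \<and> Z1 = A @ B @ [p]"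
          | (b) "\<exists>A B. Zp = A @ p # B \<and> (\<forall>x\<in>set B. E p x) \<and> Z1 = p # A @ B"
          | (c) "CZ Zp p \<and> Z1 = Zp" using f1 by blast
        then show False
        proof cases
          case f
          then obtain A B where "Z1 = A @ B @ [p]" by blast
          then have m: "\<forall>x. isL Z1 x \<longrightarrow> x = p \<or> E x p" using isL_snoc by (metis append_assoc)
          have "K \<le> phi p q t Z1" using bounce[OF Z1(2) Z1(1) sZ1 pqt m] hB Bn_def by blast
          then show False using phi_le[of p q t Z1] Z1(5) Zp(5) K_def by simp
        next
          case b
          then obtain A B where "Z1 = p # A @ B" by blast
          then have m: "\<forall>x. isF Z1 x \<longrightarrow> x = p \<or> E x p" using isF_Cons by metis
          have "K \<le> length Z1" using bounce_back[OF Z1(2) Z1(1) sZ1 pqt m] hB Bn_def by blast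
          then show False using Z1(5) Zp(5) K_def by simp
        next
          case c
          then show False using pV sZ Zp(4) unfolding CZ_def by auto
        qed
      qed }
    then show ?thesis using fromQ[OF Qw] by blast
  qed
qed

end

context rgc
begin

lemma crep: "concat (replicate a ts) @ concat (replicate b ts) = concat (replicate (a + b) ts)"
  by (simp add: replicate_add)

lemma multi:
  "\<forall>Y\<in>set Ys. Y \<in> lists V \<and> \<not> req Y [] \<Longrightarrow> r \<in> V \<Longrightarrow>
   \<exists>P. compl_walk V E (r # P) \<and> (\<forall>Y\<in>set Ys. \<exists>j<length P. grows (cw Y (take j P)) (P!j))"
proof (induction Ys)
  case Nil then show ?case by (intro exI[of _ "[]"]) simp
next
  case (Cons Y Ys)
  obtain P1 where P1: "compl_walk V E (r # P1)" "\<forall>Y\<in>set Ys. \<exists>j<length P1. grows (cw Y (take j P1)) (P1!j)"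
    using Cons by auto
  have P1V: "P1 \<in> lists V" using wk_lists[OF P1(1)] by simp
  have YV: "Y \<in> lists V" and nY: "\<not> req Y []" using Cons.prems by auto
  have Y'V: "cw Y P1 \<in> lists V" using cw_lists[OF YV P1V] .
  have nY': "\<not> req (cw Y P1) []" using cw_triv[OF P1V] nY by blast
  have lV: "last (r # P1) \<in> V" using wk_lists[OF P1(1)] by (metis in_lists_conv_set last_in_set list.distinct(1))
  obtain P2 j2 where P2: "compl_walk V E (last (r # P1) # P2)" "j2 < length P2"
    "grows (cw (cw Y P1) (take j2 P2)) (P2 ! j2)"
    using lemG[OF Y'V nY' lV] by blast
  define P where "P = P1 @ P2"
  have Pw: "compl_walk V E (r # P)" using wk_append[OF P1(1) P2(1)] P_def by simp
  have gY: "\<exists>j<length P. grows (cw Y (take j P)) (P!j)"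
  proof (intro exI conjI)
    show "length P1 + j2 < length P" using P2(2) P_def by simp
    have "take (length P1 + j2) P = P1 @ take j2 P2" using P_def by simp
    moreover have "P ! (length P1 + j2) = P2 ! j2" using P_def by (simp add: nth_append)
    ultimately show "grows (cw Y (take (length P1 + j2) P)) (P ! (length P1 + j2))"
      using P2(3) by (simp only: cw_append)
  qed
  have gYs: "\<forall>Y\<in>set Ys. \<exists>j<length P. grows (cw Y (take j P)) (P!j)"
  proof
    fix Y0 assume "Y0 \<in> set Ys"
    then obtain j where j: "j < length P1" "grows (cw Y0 (take j P1)) (P1!j)" using P1(2) by blast
    have "take j P = take j P1" "P ! j = P1 ! j" using j(1) P_def by (auto simp: nth_append)
    then show "\<exists>j<length P. grows (cw Y0 (take j P)) (P!j)" using j P_def by (intro exI[of _ j]) auto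
  qed
  show ?case using Pw gY gYs by auto
qed

lemma persist:
  assumes W: "compl_walk V E W" and Y: "Y \<in> lists V" and i: "i < length W"
    and g: "grows (cw Y (take i W)) (W!i)"
  shows "2 * (length W - i) \<le> len (cw Y W)"
proof -
  have WV: "W \<in> lists V" using wk_lists[OF W] .
  have key: "\<And>d. i + Suc d \<le> length W \<Longrightarrow> (\<exists>Z0. (W!(i+d) # Z0 @ [W!(i+d)]) \<in> lists V \<and>
      red (W!(i+d) # Z0 @ [W!(i+d)]) \<and> req (W!(i+d) # Z0 @ [W!(i+d)]) (cw Y (take (i + Suc d) W)) \<and>
      2 * Suc d \<le> length Z0 + 2)"
  proof -
    fix d show "i + Suc d \<le> length W \<Longrightarrow> ?thesis d"
    proof (induction d)
      case 0
      let ?X = "cw Y (take i W)"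
      have XV: "?X \<in> lists V" using cw_lists[OF Y take_lists[OF WV]] .
      have pV: "W ! i \<in> V" using WV i by (meson in_listsD nth_mem)
      obtain Zr where Zr: "Zr \<in> lists V" "red Zr" "req Zr ?X" "length Zr = len ?X" using red_rep[OF XV] by blast
      have rq: "req (W!i # Zr @ [W!i]) (W!i # ?X @ [W!i])" using req_wrap[OF Zr(3)] .
      have "len (W!i # Zr @ [W!i]) = length (W!i # Zr @ [W!i])"
        using req_len_eq[OF rq] g Zr(4) unfolding grows_def by simp
      then have "red (W!i # Zr @ [W!i])" using red_iff_len Zr(1) pV by simp
      moreover have "cw Y (take (Suc i) W) = W!i # ?X @ [W!i]" using cw_take_Suc[OF i] .
      ultimately show ?case using rq Zr(1) pV by (intro exI[of _ Zr]) simp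
    next
      case (Suc d)
      then obtain Z0 where Z0: "(W!(i+d) # Z0 @ [W!(i+d)]) \<in> lists V" "red (W!(i+d) # Z0 @ [W!(i+d)])"
        "req (W!(i+d) # Z0 @ [W!(i+d)]) (cw Y (take (i + Suc d) W))" "2 * Suc d \<le> length Z0 + 2" by auto
      have k: "i + Suc d < length W" using Suc.prems by simp
      have all: "\<forall>n. Suc n < length W \<longrightarrow> compl_adj V E (W!n) (W!Suc n)"
        using W unfolding compl_walk_def by blast
      have "compl_adj V E (W!(i+d)) (W!Suc (i+d))" using all k by simp
      then have adj: "compl_adj V E (W!(i+d)) (W!(i + Suc d))" by simp
      let ?b = "W!(i + Suc d)"
      let ?Z0' = "W!(i+d) # Z0 @ [W!(i+d)]"
      have bV: "?b \<in> V" using cadj[OF adj] by simp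
      have "red (?b # ?Z0' @ [?b])" using GP[OF Z0(2) adj] .
      moreover have "req (?b # ?Z0' @ [?b]) (cw Y (take (i + Suc (Suc d)) W))"
        using req_wrap[OF Z0(3)] cw_take_Suc[OF k] by simp
      moreover have "(?b # ?Z0' @ [?b]) \<in> lists V" using Z0(1) bV by simp
      ultimately show ?case using Z0(4) by (intro exI[of _ ?Z0']) simp
    qed
  qed
  define d where "d = length W - Suc i"
  have d: "length W = i + Suc d" using i d_def by simp
  obtain Z0 where Z0: "(W!(i+d) # Z0 @ [W!(i+d)]) \<in> lists V" "red (W!(i+d) # Z0 @ [W!(i+d)])"
      "req (W!(i+d) # Z0 @ [W!(i+d)]) (cw Y (take (i + Suc d) W))" "2 * Suc d \<le> length Z0 + 2"
    using key[of d] d by auto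
  have "len (cw Y W) = len (W!(i+d) # Z0 @ [W!(i+d)])" using req_len_eq[OF Z0(3)] d by simp
  also have "\<dots> = length Z0 + 2" using red_len[OF Z0(2) Z0(1)] by simp
  finally show ?thesis using Z0(4) d by simp
qed

theorem main:
  assumes w: "w \<in> lists V" and S: "S \<subseteq> lists V" "finite S"
  shows "\<exists>v ts. v \<in> lists V \<and> compl_closed_walk V E ts \<and> set ts = V \<and>
     (\<forall>L::nat. L \<ge> 1 \<longrightarrow> (\<forall>x\<in>S. \<not> racg_eq V E x [] \<longrightarrow>
        racg_len V E (w @ v @ concat (replicate L ts))
          = racg_len V E w + racg_len V E v + racg_len V E (concat (replicate L ts))
      \<and> \<not> racg_le V E (w @ v @ concat (replicate L ts))
                     (x @ w @ v @ concat (replicate L ts))))"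
proof -
  obtain ts where ts: "compl_closed_walk V E ts" "set ts = V" using closed_cover by blast
  have tsw: "compl_walk V E ts" and adj0: "compl_adj V E (hd ts) (last ts)"
    using ts(1) unfolding compl_closed_walk_def by auto
  have adj: "compl_adj V E (last ts) (hd ts)" using cadj_sym[OF adj0] .
  have tsne: "ts \<noteq> []" using wk_ne[OF tsw] .
  have TL: "\<And>k. compl_walk V E (concat (replicate (Suc k) ts))" using wk_replicate[OF tsw adj] .
  have TLc: "\<And>k. compl_walk V E (last ts # concat (replicate (Suc k) ts))"
  proof -
    fix k
    obtain r where "concat (replicate (Suc k) ts) = hd ts # r" using tsne by (cases ts) auto
    then show "compl_walk V E (last ts # concat (replicate (Suc k) ts))" using TL[of k] adj wk_Cons2 by simp
  qed
  obtain w' where w': "w' \<in> lists V" "red w'" "req w' w" "length w' = len w" using red_rep[OF w] by blast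
  obtain v1 where v1: "v1 \<in> V" "\<not> isL w' v1" using notL by blast
  obtain xs where xs: "set xs = S" using finite_list[OF S(2)] by blast
  define M where "M = sum_list (map length xs)"
  have M: "\<And>x. x \<in> S \<Longrightarrow> length x \<le> M"
  proof -
    fix x assume "x \<in> S"
    then have "length x \<in> set (map length xs)" using xs by simp
    then show "length x \<le> M" unfolding M_def by (rule member_le_sum_list) simp
  qed
  define Ys where "Ys = map (\<lambda>x. cw (cw x w) [v1]) (filter (\<lambda>x. \<not> req x []) xs)"
  have Ys: "\<forall>Y\<in>set Ys. Y \<in> lists V \<and> \<not> req Y []"
  proof
    fix Y assume "Y \<in> set Ys"
    then obtain x where x: "x \<in> S" "\<not> req x []" "Y = cw (cw x w) [v1]" using Ys_def xs by auto
    have xV: "x \<in> lists V" using x S by auto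
    have v1V: "[v1] \<in> lists V" using v1 by simp
    have "Y \<in> lists V" using x(3) cw_lists[OF cw_lists[OF xV w] v1V] by simp
    moreover have "\<not> req Y []" using x cw_triv[OF v1V] cw_triv[OF w] by blast
    ultimately show "Y \<in> lists V \<and> \<not> req Y []" by simp
  qed
  obtain P where P: "compl_walk V E (v1 # P)" "\<forall>Y\<in>set Ys. \<exists>j<length P. grows (cw Y (take j P)) (P!j)"
    using multi[OF Ys v1(1)] by blast
  have lV: "last (v1 # P) \<in> V" using wk_lists[OF P(1)] by (metis in_lists_conv_set last_in_set list.distinct(1))
  have ltV: "last ts \<in> V" using wk_lists[OF tsw] tsne by (metis in_lists_conv_set last_in_set)
  obtain Qp where Qp: "Qp \<noteq> []" "compl_walk V E (last (v1 # P) # Qp)" "last Qp = last ts"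
    using walk_to[OF lV ltV] by blast
  define v where "v = v1 # P @ Qp @ concat (replicate (Suc M) ts)"
  have W0: "compl_walk V E ((v1 # P) @ Qp)" using wk_append[OF P(1) Qp(2)] .
  have lW0: "last ((v1 # P) @ Qp) = last ts" using Qp by simp
  have Wall: "\<And>k. compl_walk V E (v1 # P @ Qp @ concat (replicate (Suc k) ts))"
    using wk_append[OF W0] lW0 TLc by simp
  have vw: "compl_walk V E v" using Wall[of M] v_def by simp
  have vV: "v \<in> lists V" using wk_lists[OF vw] .
  show ?thesis
  proof (intro exI conjI allI impI ballI)
    show "v \<in> lists V" using vV .
    show "compl_closed_walk V E ts" using ts(1) .
    show "set ts = V" using ts(2) .
  next
    fix L :: nat and x assume L: "L \<ge> 1" and x: "x \<in> S" and nx: "\<not> racg_eq V E x []"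
    obtain L' where L': "L = Suc L'" using L by (cases L) auto
    define T where "T = concat (replicate L ts)"
    define W where "W = v @ T"
    have Weq: "W = v1 # P @ Qp @ concat (replicate (Suc (Suc M + L')) ts)"
    proof -
      have "concat (replicate (Suc M) ts) @ concat (replicate (Suc L') ts) = concat (replicate (Suc (Suc M + L')) ts)"
        using crep[of "Suc M" ts "Suc L'"] by simp
      then show ?thesis unfolding W_def v_def T_def L' by simp
    qed
    have Ww: "compl_walk V E W" using Wall[of "Suc M + L'"] Weq by simp
    have WV: "W \<in> lists V" using wk_lists[OF Ww] .
    have Tw: "compl_walk V E T" using TL[of L'] T_def L' by simp
    have xV: "x \<in> lists V" using x S by auto
    have rW: "red (w' @ W)"
    proof (rule red_append[OF w'(2) walk_red[OF Ww]])
      show "\<forall>a. \<not> (isL w' a \<and> isF W a)" using walk_isF[OF Ww] v1(2) Weq by auto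
    qed
    have "len (w @ W) = len (w' @ W)" using req_len_eq req_app[OF req_sym[OF w'(3)] req_refl] by metis
    also have "\<dots> = length w' + length W" using red_len[OF rW] w'(1) WV by simp
    finally have addW: "len (w @ W) = len w + length v + length T" using w'(4) W_def by simp
    have lv: "len v = length v" using red_len[OF walk_red[OF vw] vV] .
    have lT: "len T = length T" using red_len[OF walk_red[OF Tw] wk_lists[OF Tw]] .
    show "racg_len V E (w @ v @ concat (replicate L ts))
          = racg_len V E w + racg_len V E v + racg_len V E (concat (replicate L ts))"
      using addW lv lT W_def T_def by simp
  next
    fix L :: nat and x assume L: "L \<ge> 1" and x: "x \<in> S" and nx: "\<not> racg_eq V E x []"
    obtain L' where L': "L = Suc L'" using L by (cases L) auto
    define T where "T = concat (replicate L ts)"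
    define W where "W = v @ T"
    have Weq: "W = v1 # P @ Qp @ concat (replicate (Suc (Suc M + L')) ts)"
    proof -
      have "concat (replicate (Suc M) ts) @ concat (replicate (Suc L') ts) = concat (replicate (Suc (Suc M + L')) ts)"
        using crep[of "Suc M" ts "Suc L'"] by simp
      then show ?thesis unfolding W_def v_def T_def L' by simp
    qed
    have Ww: "compl_walk V E W" using Wall[of "Suc M + L'"] Weq by simp
    have WV: "W \<in> lists V" using wk_lists[OF Ww] .
    have xV: "x \<in> lists V" using x S by auto
    have Y0V: "cw x w \<in> lists V" using cw_lists[OF xV w] .
    have "cw (cw x w) [v1] \<in> set Ys" using x nx xs Ys_def by auto
    then obtain j where j: "j < length P" "grows (cw (cw (cw x w) [v1]) (take j P)) (P!j)" using P(2) by blast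
    have tk: "take (Suc j) W = [v1] @ take j P" using j(1) Weq by simp
    have nt: "W ! Suc j = P ! j" using j(1) Weq by (simp add: nth_append)
    have gW: "grows (cw (cw x w) (take (Suc j) W)) (W ! Suc j)"
      using j(2) tk nt by (simp only: cw_append)
    have iW: "Suc j < length W" using j(1) Weq by simp
    have big: "2 * (length W - Suc j) \<le> len (cw (cw x w) W)" using persist[OF Ww Y0V iW gW] .
    have "length (concat (replicate (Suc (Suc M + L')) ts)) \<ge> Suc M"
    proof -
      have "length (concat (replicate (Suc (Suc M + L')) ts)) = Suc (Suc M + L') * length ts"
        by (simp add: length_concat sum_list_replicate)
      moreover have "length ts \<ge> 1" using tsne by (cases ts) auto
      ultimately show ?thesis using mult_le_mono2[of 1 "length ts" "Suc (Suc M + L')"] by simp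
    qed
    then have "length W - Suc j \<ge> Suc M" using Weq j(1) by simp
    then have c_big: "2 * Suc M \<le> len (cw (cw x w) W)" using big by simp
    have ceq: "rev (w @ W) @ x @ w @ W = cw (cw x w) W" by (simp add: cw_def)
    have wWV: "w @ W \<in> lists V" using w WV by simp
    have "len (x @ w @ W) \<le> len x + len (w @ W)" using len_append_le[OF xV wWV] by simp
    moreover have "len x \<le> M" using len_le[OF xV] M[OF x] by simp
    ultimately have "int (len (rev (w @ W) @ x @ w @ W)) \<noteq> int (len (x @ w @ W)) - int (len (w @ W))"
      using c_big ceq by simp
    then show "\<not> racg_le V E (w @ v @ concat (replicate L ts)) (x @ w @ v @ concat (replicate L ts))"
      unfolding racg_le_def using W_def T_def by simp
  qed
qed

end

theorem proposition2p5:
  fixes V :: "'a set" and E :: "'a \<Rightarrow> 'a \<Rightarrow> bool"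
    and w :: "'a list" and S :: "'a list set"
  assumes "simple_graph V E"
    and "card V \<ge> 3"
    and "compl_connected V E"
    and "w \<in> lists V"
    and "S \<subseteq> lists V" and "finite S"
  shows "\<exists>v ts. v \<in> lists V \<and> compl_closed_walk V E ts \<and> set ts = V \<and>
     (\<forall>L::nat. L \<ge> 1 \<longrightarrow> (\<forall>x\<in>S. \<not> racg_eq V E x [] \<longrightarrow>
        racg_len V E (w @ v @ concat (replicate L ts))
          = racg_len V E w + racg_len V E v + racg_len V E (concat (replicate L ts))
      \<and> \<not> racg_le V E (w @ v @ concat (replicate L ts))
                     (x @ w @ v @ concat (replicate L ts))))"
proof -
  interpret rgc V E
    using assms(1-3) by (unfold_locales) auto
  show ?thesis using main[OF assms(4-6)] .
qed


end
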